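(* Let $(\mathcal G,\mathcal B,\mathcal H)$ be either $(G,\beta,H)$ or $(G^L,\beta^L,H^L)$ with $L\ge2$. There is a constant $C$ depending only on the shape-regularity of the mesh family such that for every simplex $K\in\mathcal T_h$ and every $\phi\in S^1_{h,PD}$, $$\int_K\|\pi_h[\mathcal B(\phi)]-\mathcal B(\phi)\|^2+\max_{m,p=1,\dots,d}\int_K\|\Lambda_{m,p}(\phi)-\mathcal B(\phi)\,\delta_{mp}\|^2\le C\,h^2\int_K\|\nabla\phi\|^2 ,$$ where $\delta_{mp}$ is the Kronecker delta.
   Context: $d\in\{2,3\}$; $\phi:\psi=\mathrm{tr}(\phi^T\psi)$, $\|\phi\|=(\phi:\phi)^{1/2}$, $\|\nabla\phi\|^2=\sum_{i,j}\|\nabla\phi_{ij}\|^2$. For symmetric positive definite $\phi=O^TDO$ and $g:(0,\infty)\to\mathbb R$, $g(\phi):=O^Tg(D)O$. $G=\ln$, $\beta(s)=s$, $H=\ln$; $G^L(s)=\ln s$ for $0<s\le L$, $s/L+\ln L-1$ for $s\ge L$; $\beta^L(s)=\min\{s,L\}$; $H^L(s)=\ln s$ for $s\ge1/L$, $Ls+\ln(1/L)-1$ for $s\le1/L$. $D\subset\mathbb R^d$ a bounded polytope, $\mathcal T_h$ a member of a regular (shape-regular) family of conforming simplicial partitions with mesh size $h$. $S^1_h$: continuous piecewise linear symmetric matrix fields; $S^1_{h,PD}$: those $\phi\in S^1_h$ with $\phi(P)$ positive definite at every vertex $P$; $\pi_h$: nodal interpolation at vertices onto continuous piecewise linears. Operator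 $\Lambda$: for $\phi\in S^1_{h,PD}$ and a simplex $K$ with vertices $P_0,\dots,P_d$, $B_K$ the matrix with columns $P_j-P_0$; for $j=1,\dots,d$, $a_j=\mathcal B(\phi(P_j))$, $a_0=\mathcal B(\phi(P_0))$, $g_j=\mathcal G'(\phi(P_j))$, $g_0=\mathcal G'(\phi(P_0))$; if $(a_j-a_0):(g_j-g_0)\ne0$, $\hat\Lambda_j=(1-\lambda_j)a_j+\lambda_ja_0$ with $\lambda_j=\frac{\mathrm{tr}(\mathcal H(g_j))-\mathrm{tr}(\mathcal H(g_0))-a_j:(g_j-g_0)}{(a_0-a_j):(g_j-g_0)}$, else $\hat\Lambda_j=a_j$; on $K$, $\Lambda_{m,p}(\phi)=\sum_{j=1}^d[(B_K^T)^{-1}]_{mj}\hat\Lambda_j[B_K^T]_{jp}$. *)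

theory Defs
  imports "HOL-Analysis.Analysis"
begin

type_synonym 'n mat = "real^'n^'n"

definition frob :: "'n::finite mat \<Rightarrow> 'n mat \<Rightarrow> real" where
  "frob A B = trace (transpose A ** B)"

definition frob_sq :: "'n::finite mat \<Rightarrow> real" where
  "frob_sq A = frob A A"

definition diagm :: "real^'n \<Rightarrow> 'n::finite mat" where
  "diagm lam = (\<chi> i j. if i = j then lam $ i else 0)"

definition sym_posdef :: "'n::finite mat \<Rightarrow> bool" where
  "sym_posdef A \<longleftrightarrow> transpose A = A \<and> (\<forall>x. x \<noteq> 0 \<longrightarrow> x \<bullet> (A *v x) > 0)"

text \<open>Matrix function g(phi) = O^T g(D) O for a symmetric matrix phi = O^T D O
  (eigen-decomposition chosen by Hilbert choice; the result does not depend on the choice).\<close>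
definition matfun :: "(real \<Rightarrow> real) \<Rightarrow> 'n::finite mat \<Rightarrow> 'n mat" where
  "matfun g A = (let (Q, lam) = (SOME (Q, lam). orthogonal_matrix Q \<and> A = transpose Q ** diagm lam ** Q)
                 in transpose Q ** diagm (\<chi> i. g (lam $ i)) ** Q)"

definition GL :: "real \<Rightarrow> real \<Rightarrow> real" where
  "GL L s = (if s \<le> L then ln s else s / L + ln L - 1)"

definition betaL :: "real \<Rightarrow> real \<Rightarrow> real" where
  "betaL L s = min s L"

definition HL :: "real \<Rightarrow> real \<Rightarrow> real" where
  "HL L s = (if s \<ge> 1 / L then ln s else L * s + ln (1 / L) - 1)"

definition admissible_triples :: "((real \<Rightarrow> real) \<times> (real \<Rightarrow> real) \<times> (real \<Rightarrow> real)) set" where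
  "admissible_triples = {(ln, \<lambda>s. s, ln)} \<union> {(GL L, betaL L, HL L) | L. L \<ge> 2}"

text \<open>A simplex with labelled vertices: P0 and P j, j ranging over the d coordinate indices.\<close>
type_synonym 'n lsimplex = "(real^'n) \<times> ('n \<Rightarrow> real^'n)"

definition verts :: "'n::finite lsimplex \<Rightarrow> (real^'n) set" where
  "verts K = insert (fst K) (range (snd K))"

definition shull :: "'n::finite lsimplex \<Rightarrow> (real^'n) set" where
  "shull K = convex hull (verts K)"

definition is_simplex :: "'n::finite lsimplex \<Rightarrow> bool" where
  "is_simplex K \<longleftrightarrow> card (verts K) = CARD('n) + 1 \<and> \<not> affine_dependent (verts K)"

definition BK :: "'n::finite lsimplex \<Rightarrow> 'n mat" where
  "BK K = (\<chi> i j. (snd K j - fst K) $ i)"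

definition inradius :: "(real^'n::finite) set \<Rightarrow> real" where
  "inradius S = Sup {r. \<exists>x. ball x r \<subseteq> S}"

definition conforming_partition :: "(real^'n::finite) set \<Rightarrow> 'n lsimplex set \<Rightarrow> bool" where
  "conforming_partition D T \<longleftrightarrow> finite T \<and> T \<noteq> {} \<and> (\<forall>K\<in>T. is_simplex K)
     \<and> (\<Union>K\<in>T. shull K) = D
     \<and> (\<forall>K\<in>T. \<forall>K'\<in>T. verts K = verts K' \<longrightarrow> K = K')
     \<and> (\<forall>K\<in>T. \<forall>K'\<in>T. shull K \<inter> shull K' = convex hull (verts K \<inter> verts K'))"

definition meshsize :: "'n::finite lsimplex set \<Rightarrow> real" where
  "meshsize T = Max ((\<lambda>K. diameter (shull K)) ` T)"

definition S1h :: "(real^'n::finite) set \<Rightarrow> 'n lsimplex set \<Rightarrow> (real^'n \<Rightarrow> 'n mat) set" where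
  "S1h D T = {\<phi>. continuous_on D \<phi> \<and> (\<forall>x\<in>D. transpose (\<phi> x) = \<phi> x)
     \<and> (\<forall>K\<in>T. \<exists>f c. linear f \<and> (\<forall>x\<in>shull K. \<phi> x = f x + c))}"

definition S1hPD :: "(real^'n::finite) set \<Rightarrow> 'n lsimplex set \<Rightarrow> (real^'n \<Rightarrow> 'n mat) set" where
  "S1hPD D T = {\<phi>\<in>S1h D T. \<forall>K\<in>T. \<forall>P\<in>verts K. sym_posdef (\<phi> P)}"

text \<open>Nodal interpolant on K (= restriction of pi_h to K) of a matrix field v,
  via barycentric coordinates.\<close>
definition interpK :: "'n::finite lsimplex \<Rightarrow> (real^'n \<Rightarrow> 'n mat) \<Rightarrow> real^'n \<Rightarrow> 'n mat" where
  "interpK K v x = (let lam = matrix_inv (BK K) *v (x - fst K)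
     in (1 - sum (\<lambda>j. lam $ j) UNIV) *\<^sub>R v (fst K) + (\<Sum>j\<in>UNIV. (lam $ j) *\<^sub>R v (snd K j)))"

definition grad_sq :: "'n::finite lsimplex \<Rightarrow> (real^'n \<Rightarrow> 'n mat) \<Rightarrow> real^'n \<Rightarrow> real" where
  "grad_sq K \<phi> x = (\<Sum>i\<in>UNIV. \<Sum>j\<in>UNIV. \<Sum>k\<in>UNIV.
      (frechet_derivative (\<lambda>y. \<phi> y $ i $ j) (at x within shull K) (axis k 1))\<^sup>2)"

definition Lambda_hat :: "(real \<Rightarrow> real) \<Rightarrow> (real \<Rightarrow> real) \<Rightarrow> (real \<Rightarrow> real)
    \<Rightarrow> 'n::finite lsimplex \<Rightarrow> (real^'n \<Rightarrow> 'n mat) \<Rightarrow> 'n \<Rightarrow> 'n mat" where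
  "Lambda_hat G \<beta> H K \<phi> j =
    (let a0 = matfun \<beta> (\<phi> (fst K)); aj = matfun \<beta> (\<phi> (snd K j));
         g0 = matfun (deriv G) (\<phi> (fst K)); gj = matfun (deriv G) (\<phi> (snd K j))
     in if frob (aj - a0) (gj - g0) \<noteq> 0 then
          (let lamj = (trace (matfun H gj) - trace (matfun H g0) - frob aj (gj - g0))
                      / frob (a0 - aj) (gj - g0)
           in (1 - lamj) *\<^sub>R aj + lamj *\<^sub>R a0)
        else aj)"

definition Lambda :: "(real \<Rightarrow> real) \<Rightarrow> (real \<Rightarrow> real) \<Rightarrow> (real \<Rightarrow> real)
    \<Rightarrow> 'n::finite lsimplex \<Rightarrow> (real^'n \<Rightarrow> 'n mat) \<Rightarrow> 'n \<Rightarrow> 'n \<Rightarrow> 'n mat" where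
  "Lambda G \<beta> H K \<phi> m p =
    (\<Sum>j\<in>UNIV. (matrix_inv (transpose (BK K)) $ m $ j * transpose (BK K) $ j $ p)
                 *\<^sub>R Lambda_hat G \<beta> H K \<phi> j)"

end

theory Submission
  imports Defs
begin


lemma frob_inner: "frob A B = A \<bullet> B"
proof -
  have "frob A B = (\<Sum>i\<in>UNIV. \<Sum>k\<in>UNIV. A$k$i * B$k$i)"
    unfolding frob_def trace_def matrix_matrix_mult_def transpose_def by simp
  also have "\<dots> = (\<Sum>k\<in>UNIV. \<Sum>i\<in>UNIV. A$k$i * B$k$i)" by (rule sum.swap)
  also have "\<dots> = A \<bullet> B" unfolding inner_vec_def by (simp add: inner_real_def)
  finally show ?thesis .
qed

lemma frob_sq_norm: "frob_sq A = (norm A)\<^sup>2"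
  by (simp add: frob_sq_def frob_inner dot_square_norm)

lemma diagm_mul_right: "(X ** diagm u) $ i $ j = X $ i $ j * u $ j"
  unfolding diagm_def matrix_matrix_mult_def
  by (simp add: if_distrib cong: if_cong)

lemma diagm_mul_left: "(diagm u ** X) $ i $ j = u $ i * X $ i $ j"
proof -
  have "\<And>k. (if i = k then u $ i else 0) * X $ k $ j = (if k = i then u $ i * X $ i $ j else 0)" by auto
  then show ?thesis unfolding diagm_def matrix_matrix_mult_def by simp
qed

lemma QDQ_entry: "(transpose Q ** diagm u ** Q) $ a $ b = (\<Sum>i\<in>UNIV. Q$i$a * u$i * Q$i$b)"
  unfolding matrix_matrix_mult_def[of "transpose Q ** diagm u" Q]
  by (simp add: diagm_mul_right transpose_def)



lemma sym_inner:
  fixes A :: "real^'n::finite^'n"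
  assumes "transpose A = A"
  shows "x \<bullet> (A *v y) = (A *v x) \<bullet> y"
proof -
  have "x \<bullet> (A *v y) = (x v* A) \<bullet> y" by (simp add: dot_lmul_matrix)
  also have "x v* A = transpose A *v x" by (simp add: transpose_matrix_vector)
  finally show ?thesis using assms by simp
qed

lemma aux_quad: fixes c R :: real assumes "c \<ge> 0"
  shows "2*(-R/(c+1))*R + (-R/(c+1))^2*c = R^2*(-c-2)/(c+1)^2"
proof -
  have h: "(c+1) \<noteq> 0" using assms by linarith
  show ?thesis using h by (simp add: divide_simps power2_eq_square) (simp add: algebra_simps)
qed

lemma eig_step:
  fixes A :: "real^'n::finite^'n"
  assumes sym: "transpose A = A" and V: "subspace V" and inv: "\<And>v. v \<in> V \<Longrightarrow> A *v v \<in> V"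
    and u: "u \<in> V" "norm u = 1"
    and max: "\<And>v. v \<in> V \<Longrightarrow> v \<bullet> (A *v v) \<le> (u \<bullet> (A *v u)) * (v \<bullet> v)"
  shows "A *v u = (u \<bullet> (A *v u)) *\<^sub>R u"
proof -
  define \<mu> where "\<mu> = u \<bullet> (A *v u)"
  define q where "q v = \<mu> * (v \<bullet> v) - v \<bullet> (A *v v)" for v
  have q0: "v \<in> V \<Longrightarrow> q v \<ge> 0" for v using max[of v] by (simp add: q_def \<mu>_def)
  define r where "r = \<mu> *\<^sub>R u - A *v u"
  have rV: "r \<in> V" unfolding r_def using V u inv by (simp add: subspace_diff subspace_scale)
  have uu: "u \<bullet> u = 1" using u by (simp add: dot_square_norm)
  have exp: "q (u + t *\<^sub>R r) = 2 * t * (r \<bullet> r) + t^2 * q r" for t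
  proof -
    have s1: "r \<bullet> (A *v u) = u \<bullet> (A *v r)" using sym_inner[OF sym, of u r] by (simp add: inner_commute)
    have s2: "r \<bullet> r = \<mu> * (r \<bullet> u) - r \<bullet> (A *v u)" unfolding r_def[of ] 
      by (simp add: inner_diff_right inner_diff_left inner_commute algebra_simps)
    show ?thesis unfolding q_def
      apply (simp add: matrix_vector_right_distrib inner_add_left inner_add_right matrix_vector_mult_scaleR
          algebra_simps power2_eq_square uu \<mu>_def[symmetric] s1 inner_commute[of u r])
      using s2 s1 by algebra
  qed
  define c where "c = q r"
  have c0: "c \<ge> 0" using q0[OF rV] by (simp add: c_def)
  define t where "t = - (r \<bullet> r) / (c + 1)"
  have "q (u + t *\<^sub>R r) \<ge> 0" using q0 V u rV by (simp add: subspace_add subspace_scale)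
  then have "2 * t * (r \<bullet> r) + t^2 * c \<ge> 0" using exp c_def by simp
  moreover have "2 * t * (r \<bullet> r) + t^2 * c = (r \<bullet> r)^2 * (- c - 2) / (c + 1)^2"
    unfolding t_def by (rule aux_quad[OF c0])
  ultimately have "(r \<bullet> r)^2 * (- c - 2) / (c + 1)^2 \<ge> 0" by simp
  then have "(r \<bullet> r)^2 * (- c - 2) \<ge> 0" using c0
    by (simp add: zero_le_divide_iff)
  then have "(r \<bullet> r)^2 \<le> 0"
  proof (rule contrapos_pp)
    assume "\<not> (r \<bullet> r)^2 \<le> 0"
    then have "(r \<bullet> r)^2 > 0" by simp
    moreover have "- c - 2 < 0" using c0 by simp
    ultimately have "(r \<bullet> r)^2 * (- c - 2) < 0" by (rule mult_pos_neg)
    then show "\<not> 0 \<le> (r \<bullet> r)^2 * (- c - 2)" by simp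
  qed
  then have "r = 0" by simp
  then show ?thesis by (simp add: r_def \<mu>_def)
qed

lemma eig_basis:
  fixes A :: "real^'n::finite^'n"
  assumes sym: "transpose A = A"
  shows "subspace V \<Longrightarrow> (\<forall>v\<in>V. A *v v \<in> V) \<Longrightarrow>
    \<exists>B. B \<subseteq> V \<and> pairwise orthogonal B \<and> (\<forall>u\<in>B. norm u = 1 \<and> (\<exists>\<mu>. A *v u = \<mu> *\<^sub>R u)) \<and> span B = V"
proof (induction "dim V" arbitrary: V rule: less_induct)
  case less
  note V = less.prems(1) and inv = less.prems(2)
  show ?case
  proof (cases "V = {0}")
    case True then show ?thesis by (intro exI[of _ "{}"]) auto
  next
    case False
    then obtain w where w: "w \<in> V" "w \<noteq> 0" using subspace_0[OF V] by auto
    let ?S = "sphere 0 1 \<inter> V"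
    have cS: "compact ?S" by (rule compact_Int_closed) (auto simp: closed_subspace V)
    have w1: "(1 / norm w) *\<^sub>R w \<in> ?S" using w V by (auto simp: subspace_scale)
    have cont: "continuous_on ?S (\<lambda>v. v \<bullet> (A *v v))"
      by (intro continuous_intros linear_continuous_on matrix_vector_mul_linear)
    obtain u where u: "u \<in> ?S" and umax: "\<And>v. v \<in> ?S \<Longrightarrow> v \<bullet> (A *v v) \<le> u \<bullet> (A *v u)"
      using continuous_attains_sup[OF cS _ cont] w1 by blast
    have uV: "u \<in> V" and un: "norm u = 1" using u by auto
    have mx: "v \<bullet> (A *v v) \<le> (u \<bullet> (A *v u)) * (v \<bullet> v)" if vV: "v \<in> V" for v
    proof (cases "v = 0")
      case True then show ?thesis by simp
    next
      case False
      define v' where "v' = (1 / norm v) *\<^sub>R v"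
      have "v' \<in> ?S" using vV False V by (auto simp: v'_def subspace_scale)
      then have le: "v' \<bullet> (A *v v') \<le> u \<bullet> (A *v u)" by (rule umax)
      have "v \<bullet> (A *v v) = (norm v)^2 * (v' \<bullet> (A *v v'))"
        using False by (simp add: v'_def matrix_vector_mult_scaleR power2_eq_square)
      also have "\<dots> \<le> (norm v)^2 * (u \<bullet> (A *v u))" using le by (simp add: mult_left_mono)
      finally show ?thesis by (simp add: dot_square_norm mult.commute)
    qed
    define \<mu> where "\<mu> = u \<bullet> (A *v u)"
    have eig: "A *v u = \<mu> *\<^sub>R u" unfolding \<mu>_def
      by (rule eig_step[OF sym V _ uV un mx]) (use inv in auto)
    define V' where "V' = V \<inter> {v. u \<bullet> v = 0}"
    have sV': "subspace V'" unfolding V'_def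
      using subspace_Int[of "{True, False}" "\<lambda>b. if b then V else {v. u \<bullet> v = 0}"] V subspace_hyperplane[of u]
      by (simp add: Int_commute)
    have invV': "\<forall>v\<in>V'. A *v v \<in> V'"
    proof
      fix v assume "v \<in> V'"
      then have "v \<in> V" "u \<bullet> v = 0" by (auto simp: V'_def)
      moreover have "u \<bullet> (A *v v) = (A *v u) \<bullet> v" by (rule sym_inner[OF sym])
      ultimately show "A *v v \<in> V'" using inv eig by (simp add: V'_def)
    qed
    have uu: "u \<bullet> u = 1" using un by (simp add: dot_square_norm)
    have e1: "span V' = V'" using sV' by (simp add: span_eq_iff)
    have e2: "span V = V" using V by (simp add: span_eq_iff)
    have "u \<notin> V'" using uu by (simp add: V'_def)
    moreover have "V' \<subseteq> V" by (auto simp: V'_def)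
    ultimately have "V' \<subset> V" using uV by blast
    then have "span V' \<subset> span V" by (simp only: e1 e2)
    then have "dim V' < dim V" by (rule dim_psubset)
    then obtain B' where B': "B' \<subseteq> V'" "pairwise orthogonal B'"
      "\<forall>u\<in>B'. norm u = 1 \<and> (\<exists>\<mu>. A *v u = \<mu> *\<^sub>R u)" "span B' = V'"
      using less.hyps[OF _ sV' invV'] by blast
    have uB': "\<forall>y\<in>B'. u \<bullet> y = 0" using B'(1) by (auto simp: V'_def)
    show ?thesis
    proof (intro exI[of _ "insert u B'"] conjI)
      show "insert u B' \<subseteq> V" using B'(1) uV by (auto simp: V'_def)
      show "pairwise orthogonal (insert u B')"
        using B'(2) uB' by (auto simp: pairwise_insert orthogonal_def inner_commute)
      show "\<forall>v\<in>insert u B'. norm v = 1 \<and> (\<exists>\<mu>. A *v v = \<mu> *\<^sub>R v)"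
        using B'(3) un eig by auto
      show "span (insert u B') = V"
      proof
        show "span (insert u B') \<subseteq> V" using B'(1) uV V by (intro span_minimal) (auto simp: V'_def)
        show "V \<subseteq> span (insert u B')"
        proof
          fix v assume vV: "v \<in> V"
          have "v - (u \<bullet> v) *\<^sub>R u \<in> V'" using vV uV V uu
            by (auto simp: V'_def subspace_diff subspace_scale inner_diff_right)
          then have "v - (u \<bullet> v) *\<^sub>R u \<in> span (insert u B')"
            using B'(4) span_mono[of B' "insert u B'"] by auto
          moreover have "(u \<bullet> v) *\<^sub>R u \<in> span (insert u B')" by (intro span_mul span_base) simp
          ultimately have "(v - (u \<bullet> v) *\<^sub>R u) + (u \<bullet> v) *\<^sub>R u \<in> span (insert u B')" by (rule span_add)
          then show "v \<in> span (insert u B')" by simp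
        qed
      qed
    qed
  qed
qed

lemma spectral:
  fixes A :: "real^'n::finite^'n"
  assumes sym: "transpose A = A"
  shows "\<exists>Q lam. orthogonal_matrix Q \<and> A = transpose Q ** diagm lam ** Q"
proof -
  obtain B where B: "pairwise orthogonal B" "\<forall>u\<in>B. norm u = 1 \<and> (\<exists>\<mu>. A *v u = \<mu> *\<^sub>R u)" "span B = UNIV"
    using eig_basis[OF sym, of UNIV] by auto
  have 0: "0 \<notin> B" using B(2) by auto
  have ind: "independent B" by (rule pairwise_orthogonal_independent[OF B(1) 0])
  have fin: "finite B" and cB: "card B = dim (span B)" using indep_card_eq_dim_span[OF ind] by auto
  then have cB': "card B = CARD('n)" using B(3) by (simp add: dim_UNIV)
  obtain e :: "'n \<Rightarrow> real^'n" where e: "bij_betw e UNIV B" using finite_same_card_bij[of "UNIV::'n set" B] fin cB' by auto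
  then have eB: "e i \<in> B" for i by (auto simp: bij_betw_def)
  have einj: "e i = e j \<Longrightarrow> i = j" for i j using e by (auto simp: bij_betw_def inj_def)
  obtain m where m: "\<forall>u\<in>B. A *v u = m u *\<^sub>R u" using B(2) by metis
  define Q where "Q = (\<chi> i. e i)"
  define lam where "lam = (\<chi> i. m (e i))"
  have ee: "e i \<bullet> e j = (if i = j then 1 else 0)" for i j
  proof (cases "i = j")
    case True then show ?thesis using B(2) eB[of i] by (simp add: dot_square_norm)
  next
    case False then have "e i \<noteq> e j" using einj by blast
    then show ?thesis using B(1) eB[of i] eB[of j] False by (auto simp: pairwise_def orthogonal_def)
  qed
  have QQt: "Q ** transpose Q = mat 1"
    unfolding vec_eq_iff
  proof (intro allI)
    fix i j
    have "(Q ** transpose Q) $ i $ j = e i \<bullet> e j"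
      by (simp add: matrix_matrix_mult_def transpose_def Q_def inner_vec_def)
    then show "(Q ** transpose Q) $ i $ j = mat 1 $ i $ j" by (simp add: ee mat_def)
  qed
  then have QtQ: "transpose Q ** Q = mat 1" by (simp add: matrix_left_right_inverse)
  have orth: "orthogonal_matrix Q" using QQt QtQ by (simp add: orthogonal_matrix_def)
  have AQt: "A ** transpose Q = transpose Q ** diagm lam"
    unfolding vec_eq_iff
  proof (intro allI)
    fix a i
    have "(A ** transpose Q) $ a $ i = (A *v e i) $ a"
      by (simp add: matrix_matrix_mult_def transpose_def Q_def matrix_vector_mult_def)
    also have "\<dots> = m (e i) * e i $ a" using m eB[of i] by simp
    also have "\<dots> = (transpose Q ** diagm lam) $ a $ i"
      by (simp add: diagm_mul_right transpose_def Q_def lam_def)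
    finally show "(A ** transpose Q) $ a $ i = (transpose Q ** diagm lam) $ a $ i" .
  qed
  have "A = A ** (transpose Q ** Q)" by (simp add: QtQ)
  also have "\<dots> = transpose Q ** diagm lam ** Q" by (simp add: matrix_mul_assoc AQt)
  finally show ?thesis using orth by blast
qed



lemma diag_commute:
  fixes Q P :: "real^'n::finite^'n"
  assumes oQ: "orthogonal_matrix Q" and oP: "orthogonal_matrix P"
    and eq: "transpose Q ** diagm x ** Q = transpose P ** diagm y ** P"
  shows "transpose Q ** diagm (\<chi> i. f (x$i)) ** Q = transpose P ** diagm (\<chi> i. f (y$i)) ** P"
proof -
  have QQ: "Q ** transpose Q = mat 1" "transpose Q ** Q = mat 1" using oQ by (auto simp: orthogonal_matrix_def)
  have PP: "P ** transpose P = mat 1" "transpose P ** P = mat 1" using oP by (auto simp: orthogonal_matrix_def)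
  have QQ': "Q ** (transpose Q ** X) = X" "transpose Q ** (Q ** X) = X" for X
    by (simp_all add: matrix_mul_assoc QQ)
  have PP': "P ** (transpose P ** X) = X" "transpose P ** (P ** X) = X" for X
    by (simp_all add: matrix_mul_assoc PP)
  define R where "R = P ** transpose Q"
  have "R ** diagm x = P ** (transpose Q ** diagm x ** Q) ** transpose Q"
    by (simp add: R_def matrix_mul_assoc[symmetric] QQ QQ')
  also have "\<dots> = P ** (transpose P ** diagm y ** P) ** transpose Q" by (simp add: eq)
  also have "\<dots> = diagm y ** R" by (simp add: R_def matrix_mul_assoc[symmetric] PP PP')
  finally have RD: "R ** diagm x = diagm y ** R" .
  have RDf: "R ** diagm (\<chi> i. f (x$i)) = diagm (\<chi> i. f (y$i)) ** R"
    unfolding vec_eq_iff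
  proof (intro allI)
    fix i j
    have "R $ i $ j * x $ j = y $ i * R $ i $ j"
      using arg_cong[OF RD, of "\<lambda>M. M $ i $ j"] by (simp add: diagm_mul_right diagm_mul_left)
    then have "R $ i $ j * f (x $ j) = f (y $ i) * R $ i $ j"
      by (cases "R $ i $ j = 0") auto
    then show "(R ** diagm (\<chi> i. f (x $ i))) $ i $ j = (diagm (\<chi> i. f (y $ i)) ** R) $ i $ j"
      by (simp add: diagm_mul_right diagm_mul_left)
  qed
  have RQ: "R ** Q = P" by (simp add: R_def matrix_mul_assoc[symmetric] QQ QQ')
  have PR: "transpose P ** R = transpose Q" by (simp add: R_def matrix_mul_assoc PP PP')
  have "transpose P ** diagm (\<chi> i. f (y$i)) ** P = transpose P ** diagm (\<chi> i. f (y$i)) ** (R ** Q)"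
    by (simp add: RQ)
  also have "\<dots> = transpose P ** (diagm (\<chi> i. f (y$i)) ** R) ** Q" by (simp add: matrix_mul_assoc)
  also have "\<dots> = transpose P ** (R ** diagm (\<chi> i. f (x$i))) ** Q" by (simp add: RDf)
  also have "\<dots> = (transpose P ** R) ** diagm (\<chi> i. f (x$i)) ** Q" by (simp add: matrix_mul_assoc)
  also have "\<dots> = transpose Q ** diagm (\<chi> i. f (x$i)) ** Q" by (simp add: PR)
  finally show ?thesis by simp
qed

lemma matfun_eq:
  fixes Q :: "real^'n::finite^'n"
  assumes oQ: "orthogonal_matrix Q" and A: "A = transpose Q ** diagm lam ** Q"
  shows "matfun g A = transpose Q ** diagm (\<chi> i. g (lam$i)) ** Q"
proof -
  let ?P = "\<lambda>(Q, lam). orthogonal_matrix Q \<and> A = transpose Q ** diagm lam ** Q"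
  have ex: "\<exists>x. ?P x" using oQ A by auto
  obtain Q' lam' where ch: "(SOME x. ?P x) = (Q', lam')" by (cases "SOME x. ?P x") auto
  have "?P (Q', lam')" using someI_ex[OF ex] ch by simp
  then have o': "orthogonal_matrix Q'" and A': "A = transpose Q' ** diagm lam' ** Q'" by auto
  have "matfun g A = transpose Q' ** diagm (\<chi> i. g (lam'$i)) ** Q'"
    unfolding matfun_def ch by simp
  also have "\<dots> = transpose Q ** diagm (\<chi> i. g (lam$i)) ** Q"
    by (rule diag_commute[OF o' oQ]) (use A A' in simp)
  finally show ?thesis .
qed



definition Wm :: "real^'n::finite^'n \<Rightarrow> real^'n^'n \<Rightarrow> 'n \<Rightarrow> 'n \<Rightarrow> real" where
  "Wm Q P i k = ((Q ** transpose P) $ i $ k)^2"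

lemma transpose_diagm: "transpose (diagm u) = diagm u"
  by (simp add: transpose_def diagm_def vec_eq_iff)

lemma QDQ_sym: "transpose (transpose Q ** diagm u ** Q) = transpose Q ** diagm u ** Q"
  by (simp add: matrix_transpose_mul transpose_diagm matrix_mul_assoc)

lemma frob_QDP:
  fixes Q P :: "real^'n::finite^'n"
  shows "frob (transpose Q ** diagm u ** Q) (transpose P ** diagm v ** P)
     = (\<Sum>i\<in>UNIV. \<Sum>k\<in>UNIV. Wm Q P i k * u$i * v$k)"
proof -
  define M where "M = Q ** transpose P"
  have Mt: "transpose M = P ** transpose Q" by (simp add: M_def matrix_transpose_mul)
  have "frob (transpose Q ** diagm u ** Q) (transpose P ** diagm v ** P)
      = trace (transpose Q ** (diagm u ** Q ** transpose P ** diagm v ** P))"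
    unfolding frob_def QDQ_sym by (simp add: matrix_mul_assoc)
  also have "\<dots> = trace ((diagm u ** Q ** transpose P ** diagm v ** P) ** transpose Q)"
    by (rule trace_mul_sym)
  also have "\<dots> = trace (diagm u ** M ** diagm v ** transpose M)"
    by (simp add: M_def matrix_transpose_mul matrix_mul_assoc)
  also have "\<dots> = (\<Sum>i\<in>UNIV. u$i * (\<Sum>k\<in>UNIV. M$i$k * v$k * M$i$k))"
  proof -
    have "(diagm u ** M ** diagm v ** transpose M) $ i $ i = u$i * (\<Sum>k\<in>UNIV. M$i$k * v$k * M$i$k)" for i
    proof -
      have "(diagm u ** M ** diagm v ** transpose M) $ i $ i = u$i * (M ** diagm v ** transpose M) $ i $ i"
        by (simp add: matrix_mul_assoc[symmetric] diagm_mul_left)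
      moreover have "(M ** diagm v ** transpose M) $ i $ i = (\<Sum>k\<in>UNIV. (M ** diagm v)$i$k * transpose M $k $i)"
        by (simp add: matrix_matrix_mult_def[of "M ** diagm v"])
      ultimately show ?thesis by (simp add: diagm_mul_right transpose_def)
    qed
    then show ?thesis unfolding trace_def by simp
  qed
  also have "\<dots> = (\<Sum>i\<in>UNIV. \<Sum>k\<in>UNIV. Wm Q P i k * u$i * v$k)"
    by (simp add: Wm_def M_def sum_distrib_left power2_eq_square algebra_simps)
  finally show ?thesis .
qed

lemma orth_mult: fixes Q P :: "real^'n::finite^'n" shows "orthogonal_matrix Q \<Longrightarrow> orthogonal_matrix P \<Longrightarrow> orthogonal_matrix (Q ** transpose P)"
  using orthogonal_matrix_mul[of Q "transpose P"] by simp

lemma Wm_row: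
  fixes Q P :: "real^'n::finite^'n"
  assumes "orthogonal_matrix Q" "orthogonal_matrix P"
  shows "(\<Sum>k\<in>UNIV. Wm Q P i k) = 1"
proof -
  define M where "M = Q ** transpose P"
  have "M ** transpose M = mat 1" using orth_mult[OF assms] by (simp add: M_def orthogonal_matrix_def)
  then have "(M ** transpose M) $ i $ i = 1" by (simp add: mat_def)
  then have "(\<Sum>k\<in>UNIV. M$i$k * M$i$k) = 1" by (simp add: matrix_matrix_mult_def transpose_def)
  then show ?thesis unfolding Wm_def M_def[symmetric] by (simp add: power2_eq_square)
qed

lemma Wm_col:
  fixes Q P :: "real^'n::finite^'n"
  assumes "orthogonal_matrix Q" "orthogonal_matrix P"
  shows "(\<Sum>i\<in>UNIV. Wm Q P i k) = 1"
proof -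
  define M where "M = Q ** transpose P"
  have "transpose M ** M = mat 1" using orth_mult[OF assms] by (simp add: M_def orthogonal_matrix_def)
  then have "(transpose M ** M) $ k $ k = 1" by (simp add: mat_def)
  then have "(\<Sum>i\<in>UNIV. M$i$k * M$i$k) = 1" by (simp add: matrix_matrix_mult_def transpose_def)
  then show ?thesis unfolding Wm_def M_def[symmetric] by (simp add: power2_eq_square)
qed

lemma Wm_self:
  fixes Q :: "real^'n::finite^'n"
  assumes "orthogonal_matrix Q"
  shows "Wm Q Q i k = (if i = k then 1 else 0)"
  using assms by (simp add: Wm_def orthogonal_matrix_def mat_def)

lemma frob_QDQ_self:
  fixes Q :: "real^'n::finite^'n"
  assumes "orthogonal_matrix Q"
  shows "frob (transpose Q ** diagm u ** Q) (transpose Q ** diagm v ** Q) = (\<Sum>i\<in>UNIV. u$i * v$i)"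
proof -
  have "Wm Q Q i k * u$i * v$k = (if k = i then u$i * v$i else 0)" for i k
    using Wm_self[OF assms, of i k] by auto
  then show ?thesis by (simp add: frob_QDP)
qed

lemma trace_QDQ:
  fixes Q :: "real^'n::finite^'n"
  assumes "orthogonal_matrix Q"
  shows "trace (transpose Q ** diagm u ** Q) = (\<Sum>i\<in>UNIV. u$i)"
proof -
  have "trace (transpose Q ** diagm u ** Q) = trace (diagm u ** Q ** transpose Q)"
    by (metis trace_mul_sym matrix_mul_assoc)
  also have "\<dots> = trace (diagm u)" using assms
    by (simp add: orthogonal_matrix_def matrix_mul_assoc[symmetric])
  also have "\<dots> = (\<Sum>i\<in>UNIV. u$i)" by (simp add: trace_def diagm_def)
  finally show ?thesis .
qed

lemma sum_W_row: "orthogonal_matrix Q \<Longrightarrow> orthogonal_matrix P \<Longrightarrow>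
   (\<Sum>i\<in>UNIV. f i) = (\<Sum>i\<in>UNIV. \<Sum>k\<in>UNIV. Wm Q P i k * f i)"
  by (simp add: sum_distrib_right[symmetric] Wm_row)

lemma sum_W_col: "orthogonal_matrix Q \<Longrightarrow> orthogonal_matrix P \<Longrightarrow>
   (\<Sum>k\<in>UNIV. f k) = (\<Sum>i\<in>UNIV. \<Sum>k\<in>UNIV. Wm Q P i k * f k)"
  by (subst sum.swap) (simp add: sum_distrib_right[symmetric] Wm_col)

lemma frob_sq_diff:
  fixes Q P :: "real^'n::finite^'n"
  assumes oQ: "orthogonal_matrix Q" and oP: "orthogonal_matrix P"
  shows "frob_sq (transpose Q ** diagm u ** Q - transpose P ** diagm v ** P)
    = (\<Sum>i\<in>UNIV. \<Sum>k\<in>UNIV. Wm Q P i k * (u$i - v$k)^2)"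
proof -
  let ?X = "transpose Q ** diagm u ** Q" and ?Y = "transpose P ** diagm v ** P"
  have "frob_sq (?X - ?Y) = frob ?X ?X - 2 * frob ?X ?Y + frob ?Y ?Y"
    by (simp add: frob_sq_def frob_inner inner_diff_left inner_diff_right inner_commute)
  also have "\<dots> = (\<Sum>i\<in>UNIV. u$i * u$i) - 2 * (\<Sum>i\<in>UNIV. \<Sum>k\<in>UNIV. Wm Q P i k * u$i * v$k)
       + (\<Sum>k\<in>UNIV. v$k * v$k)"
    using frob_QDQ_self[OF oQ, of u u] frob_QDQ_self[OF oP, of v v] frob_QDP[of Q u P v] by simp
  also have "\<dots> = (\<Sum>i\<in>UNIV. \<Sum>k\<in>UNIV. Wm Q P i k * (u$i * u$i))
       - 2 * (\<Sum>i\<in>UNIV. \<Sum>k\<in>UNIV. Wm Q P i k * u$i * v$k)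
       + (\<Sum>i\<in>UNIV. \<Sum>k\<in>UNIV. Wm Q P i k * (v$k * v$k))"
    using sum_W_row[OF oQ oP, of "\<lambda>i. u$i * u$i"] sum_W_col[OF oQ oP, of "\<lambda>k. v$k * v$k"] by simp
  also have "\<dots> = (\<Sum>i\<in>UNIV. \<Sum>k\<in>UNIV. Wm Q P i k * (u$i - v$k)^2)"
    by (simp add: sum_distrib_left sum_subtractf[symmetric] sum.distrib[symmetric] power2_eq_square algebra_simps)
  finally show ?thesis .
qed



lemma GL_deriv:
  fixes L s :: real assumes L: "L > 0" and s: "s > 0"
  shows "(GL L has_real_derivative 1 / min s L) (at s)"
proof (cases "s < L")
  case True
  have ev: "eventually (\<lambda>x. GL L x = ln x) (nhds s)"
    using eventually_nhds_in_open[of "{..<L}" s] True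
    by (auto elim!: eventually_mono simp: GL_def)
  have "(ln has_real_derivative 1 / s) (at s)" using s by (auto intro!: derivative_eq_intros)
  then show ?thesis using True
    by (subst DERIV_cong_ev[OF refl ev refl]) simp
next
  case False
  show ?thesis
  proof (cases "s > L")
    case True
    have ev: "eventually (\<lambda>x. GL L x = x / L + ln L - 1) (nhds s)"
      using eventually_nhds_in_open[of "{L<..}" s] True
      by (auto elim!: eventually_mono simp: GL_def)
    have "((\<lambda>x. x / L + ln L - 1) has_real_derivative 1 / L) (at s)"
      using L by (auto intro!: derivative_eq_intros)
    then show ?thesis using True
      by (subst DERIV_cong_ev[OF refl ev refl]) simp
  next
    case False
    with \<open>\<not> s < L\<close> have sL: "s = L" by simp
    have lnd: "(ln has_real_derivative 1 / L) (at L)" using L by (auto intro!: derivative_eq_intros)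
    have q: "((\<lambda>h. (ln (L + h) - ln L) / h) \<longlongrightarrow> 1 / L) (at 0)"
      using lnd by (simp add: DERIV_def)
    have "((\<lambda>h. (GL L (L + h) - GL L L) / h) \<longlongrightarrow> 1 / L) (at 0)"
      unfolding filterlim_at_split
    proof
      have q1: "((\<lambda>h. (ln (L + h) - ln L) / h) \<longlongrightarrow> 1 / L) (at_left 0)"
        using q by (simp add: filterlim_at_split)
      have ev1: "eventually (\<lambda>h. (GL L (L + h) - GL L L) / h = (ln (L + h) - ln L) / h) (at_left 0)"
        by (auto simp: GL_def eventually_at_left_field intro!: exI[of _ "-1"])
      show "((\<lambda>h. (GL L (L + h) - GL L L) / h) \<longlongrightarrow> 1 / L) (at_left 0)"
        by (subst tendsto_cong[OF ev1]) (rule q1)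
    next
      have ev2: "eventually (\<lambda>h. (GL L (L + h) - GL L L) / h = 1 / L) (at_right 0)"
        using L by (auto simp: GL_def eventually_at_right_field intro!: exI[of _ 1] simp: field_simps)
      show "((\<lambda>h. (GL L (L + h) - GL L L) / h) \<longlongrightarrow> 1 / L) (at_right 0)"
        by (subst tendsto_cong[OF ev2]) simp
    qed
    then show ?thesis using sL by (simp add: DERIV_def)
  qed
qed

lemma triple_props:
  assumes "(G, \<beta>, H) \<in> admissible_triples"
  shows "(\<forall>s>0. \<beta> s > 0 \<and> deriv G s = 1 / \<beta> s \<and> H (1 / \<beta> s) = - ln (\<beta> s))
       \<and> (\<forall>s t. \<bar>\<beta> s - \<beta> t\<bar> \<le> \<bar>s - t\<bar>)"
  using assms unfolding admissible_triples_def
proof (elim UnE)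
  assume "(G, \<beta>, H) \<in> {(ln, \<lambda>s. s, ln)}"
  then have e: "G = ln" "\<beta> = (\<lambda>s. s)" "H = ln" by auto
  have "deriv ln s = 1 / s" if "s > 0" for s :: real
    using that by (intro DERIV_imp_deriv) (auto intro!: derivative_eq_intros)
  then show ?thesis using e by (auto simp: ln_div)
next
  assume "(G, \<beta>, H) \<in> {(GL L, betaL L, HL L) |L. 2 \<le> L}"
  then obtain L where e: "G = GL L" "\<beta> = betaL L" "H = HL L" and L: "L \<ge> 2" by auto
  have d: "deriv (GL L) s = 1 / min s L" if "s > 0" for s
    using that L by (intro DERIV_imp_deriv GL_deriv) auto
  have h: "HL L (1 / min s L) = - ln (min s L)" if "s > 0" for s
  proof -
    have "1 / min s L \<ge> 1 / L" using that L by (simp add: frac_le)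
    then show ?thesis using that L by (simp add: HL_def ln_div)
  qed
  have lip: "\<bar>min s L - min t L\<bar> \<le> \<bar>s - t\<bar>" for s t :: real by (simp add: min_def)
  show ?thesis using e d h lip L by (auto simp: betaL_def)
qed



lemma matfun_lip:
  fixes A B :: "real^'n::finite^'n"
  assumes sA: "transpose A = A" and sB: "transpose B = B" and lip: "\<forall>s t. \<bar>f s - f t\<bar> \<le> \<bar>s - t\<bar>"
  shows "norm (matfun f A - matfun f B) \<le> norm (A - B)"
proof -
  obtain Q u where Q: "orthogonal_matrix Q" "A = transpose Q ** diagm u ** Q" using spectral[OF sA] by blast
  obtain P v where P: "orthogonal_matrix P" "B = transpose P ** diagm v ** P" using spectral[OF sB] by blast
  have W0: "Wm Q P i k \<ge> 0" for i k by (simp add: Wm_def)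
  have "(norm (matfun f A - matfun f B))^2 = frob_sq (matfun f A - matfun f B)" by (simp add: frob_sq_norm)
  also have "\<dots> = (\<Sum>i\<in>UNIV. \<Sum>k\<in>UNIV. Wm Q P i k * ((\<chi> i. f (u$i))$i - (\<chi> i. f (v$i))$k)^2)"
    unfolding matfun_eq[OF Q] matfun_eq[OF P] by (rule frob_sq_diff[OF Q(1) P(1)])
  also have "\<dots> \<le> (\<Sum>i\<in>UNIV. \<Sum>k\<in>UNIV. Wm Q P i k * (u$i - v$k)^2)"
  proof (intro sum_mono mult_left_mono W0)
    fix i k
    have "\<bar>f (u$i) - f (v$k)\<bar> \<le> \<bar>u$i - v$k\<bar>" using lip by blast
    then show "((\<chi> i. f (u$i))$i - (\<chi> i. f (v$i))$k)^2 \<le> (u$i - v$k)^2"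
      by (simp add: abs_le_square_iff)
  qed
  also have "\<dots> = frob_sq (A - B)" unfolding Q(2) P(2) by (rule frob_sq_diff[OF Q(1) P(1), symmetric])
  also have "\<dots> = (norm (A - B))^2" by (simp add: frob_sq_norm)
  finally show ?thesis by (rule power2_le_imp_le) simp
qed

lemma pd_eig:
  fixes A Q :: "real^'n::finite^'n"
  assumes pd: "sym_posdef A" and Q: "orthogonal_matrix Q" "A = transpose Q ** diagm s ** Q"
  shows "s $ i > 0"
proof -
  define e :: "real^'n" where "e = axis i 1"
  define x where "x = transpose Q *v e"
  have QQ: "Q ** transpose Q = mat 1" using Q(1) by (simp add: orthogonal_matrix_def)
  have Qx: "Q *v x = e" unfolding x_def by (simp add: matrix_vector_mul_assoc QQ del: transpose_matrix_vector)
  have "x \<noteq> 0" using Qx by (auto simp: e_def)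
  then have xx: "x \<bullet> x > 0" by simp
  have De: "diagm s *v e = s$i *\<^sub>R e"
  proof -
    have "(if a = j then s $ a else 0) * (if j = i then 1 else 0) = (if j = a then (if a = i then s$i else 0) else 0)"
      for a j :: 'n by auto
    then show ?thesis by (simp add: vec_eq_iff matrix_vector_mult_def diagm_def e_def axis_def)
  qed
  have "A *v x = s$i *\<^sub>R x"
    unfolding Q(2) by (simp add: matrix_vector_mul_assoc[symmetric] Qx De matrix_vector_mult_scaleR del: transpose_matrix_vector) (simp add: x_def del: transpose_matrix_vector)
  then have "x \<bullet> (A *v x) = s$i * (x \<bullet> x)" by simp
  moreover have "x \<bullet> (A *v x) > 0" using pd \<open>x \<noteq> 0\<close> by (simp add: sym_posdef_def)
  ultimately show ?thesis using xx by (simp add: zero_less_mult_iff)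
qed

lemma x_minus_ln: "x > 0 \<Longrightarrow> 0 \<le> x - 1 - ln (x::real)"
  using ln_le_minus_one[of x] by simp

lemma lam_unit:
  fixes A0 Aj :: "real^'n::finite^'n"
  assumes tr: "(G, \<beta>, H) \<in> admissible_triples"
    and pd0: "sym_posdef A0" and pdj: "sym_posdef Aj"
    and nz: "frob (matfun \<beta> Aj - matfun \<beta> A0) (matfun (deriv G) Aj - matfun (deriv G) A0) \<noteq> 0"
  shows "0 \<le> (trace (matfun H (matfun (deriv G) Aj)) - trace (matfun H (matfun (deriv G) A0))
              - frob (matfun \<beta> Aj) (matfun (deriv G) Aj - matfun (deriv G) A0))
           / frob (matfun \<beta> A0 - matfun \<beta> Aj) (matfun (deriv G) Aj - matfun (deriv G) A0)
       \<and> (trace (matfun H (matfun (deriv G) Aj)) - trace (matfun H (matfun (deriv G) A0))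
              - frob (matfun \<beta> Aj) (matfun (deriv G) Aj - matfun (deriv G) A0))
           / frob (matfun \<beta> A0 - matfun \<beta> Aj) (matfun (deriv G) Aj - matfun (deriv G) A0) \<le> 1"
proof -
  have props: "\<And>s. s > 0 \<Longrightarrow> \<beta> s > 0 \<and> deriv G s = 1 / \<beta> s \<and> H (1 / \<beta> s) = - ln (\<beta> s)"
    using triple_props[OF tr] by blast
  have sj: "transpose Aj = Aj" and s0: "transpose A0 = A0" using pd0 pdj by (auto simp: sym_posdef_def)
  obtain Q s where Q: "orthogonal_matrix Q" "Aj = transpose Q ** diagm s ** Q" using spectral[OF sj] by blast
  obtain P t where P: "orthogonal_matrix P" "A0 = transpose P ** diagm t ** P" using spectral[OF s0] by blast
  have spos: "s$i > 0" for i by (rule pd_eig[OF pdj Q])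
  have tpos: "t$i > 0" for i by (rule pd_eig[OF pd0 P])
  define \<alpha> where "\<alpha> = (\<chi> i. \<beta> (s$i))"
  define \<gamma> where "\<gamma> = (\<chi> i. \<beta> (t$i))"
  have ap: "\<alpha>$i > 0" for i using props[OF spos[of i]] by (simp add: \<alpha>_def)
  have gp: "\<gamma>$i > 0" for i using props[OF tpos[of i]] by (simp add: \<gamma>_def)
  have anz: "\<alpha>$i \<noteq> 0" for i using ap[of i] by simp
  have gnz: "\<gamma>$i \<noteq> 0" for i using gp[of i] by simp
  define ia where "ia = (\<chi> i. 1 / \<alpha>$i)"
  define ig where "ig = (\<chi> i. 1 / \<gamma>$i)"
  have aj: "matfun \<beta> Aj = transpose Q ** diagm \<alpha> ** Q" unfolding \<alpha>_def by (rule matfun_eq[OF Q])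
  have a0: "matfun \<beta> A0 = transpose P ** diagm \<gamma> ** P" unfolding \<gamma>_def by (rule matfun_eq[OF P])
  have gj: "matfun (deriv G) Aj = transpose Q ** diagm ia ** Q"
  proof -
    have "(\<chi> i. deriv G (s$i)) = ia" using props[OF spos] by (simp add: ia_def \<alpha>_def vec_eq_iff)
    then show ?thesis using matfun_eq[OF Q, of "deriv G"] by simp
  qed
  have g0: "matfun (deriv G) A0 = transpose P ** diagm ig ** P"
  proof -
    have "(\<chi> i. deriv G (t$i)) = ig" using props[OF tpos] by (simp add: ig_def \<gamma>_def vec_eq_iff)
    then show ?thesis using matfun_eq[OF P, of "deriv G"] by simp
  qed
  have hj: "matfun H (matfun (deriv G) Aj) = transpose Q ** diagm (\<chi> i. - ln (\<alpha>$i)) ** Q"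
  proof -
    have "(\<chi> i. H (ia$i)) = (\<chi> i. - ln (\<alpha>$i))" using props[OF spos] by (simp add: ia_def \<alpha>_def vec_eq_iff)
    then show ?thesis using matfun_eq[OF Q(1) gj, of H] by simp
  qed
  have h0: "matfun H (matfun (deriv G) A0) = transpose P ** diagm (\<chi> i. - ln (\<gamma>$i)) ** P"
  proof -
    have "(\<chi> i. H (ig$i)) = (\<chi> i. - ln (\<gamma>$i))" using props[OF tpos] by (simp add: ig_def \<gamma>_def vec_eq_iff)
    then show ?thesis using matfun_eq[OF P(1) g0, of H] by simp
  qed
  define W where "W = Wm Q P"
  have W0: "W i k \<ge> 0" for i k by (simp add: W_def Wm_def)
  have Tj: "trace (matfun H (matfun (deriv G) Aj)) = (\<Sum>i\<in>UNIV. \<Sum>k\<in>UNIV. W i k * (- ln (\<alpha>$i)))"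
    unfolding hj trace_QDQ[OF Q(1)] W_def vector_component_simps by (rule sum_W_row[OF Q(1) P(1)])
  have T0: "trace (matfun H (matfun (deriv G) A0)) = (\<Sum>i\<in>UNIV. \<Sum>k\<in>UNIV. W i k * (- ln (\<gamma>$k)))"
    unfolding h0 trace_QDQ[OF P(1)] W_def vector_component_simps by (rule sum_W_col[OF Q(1) P(1)])
  have f1: "frob (matfun \<beta> Aj) (matfun (deriv G) Aj) = (\<Sum>i\<in>UNIV. \<Sum>k\<in>UNIV. W i k * 1)"
  proof -
    have "frob (matfun \<beta> Aj) (matfun (deriv G) Aj) = (\<Sum>i\<in>UNIV. \<alpha>$i * ia$i)"
      unfolding aj gj by (rule frob_QDQ_self[OF Q(1)])
    also have "\<dots> = (\<Sum>i\<in>(UNIV::'n set). 1)"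
    proof -
      have "\<alpha>$i * ia$i = 1" for i using ap[of i] by (simp add: ia_def)
      then show ?thesis by simp
    qed
    finally show ?thesis using sum_W_row[OF Q(1) P(1), of "\<lambda>_. 1"] by (simp add: W_def)
  qed
  have f4: "frob (matfun \<beta> A0) (matfun (deriv G) A0) = (\<Sum>i\<in>UNIV. \<Sum>k\<in>UNIV. W i k * 1)"
  proof -
    have "frob (matfun \<beta> A0) (matfun (deriv G) A0) = (\<Sum>i\<in>UNIV. \<gamma>$i * ig$i)"
      unfolding a0 g0 by (rule frob_QDQ_self[OF P(1)])
    also have "\<dots> = (\<Sum>i\<in>(UNIV::'n set). 1)"
    proof -
      have "\<gamma>$i * ig$i = 1" for i using gp[of i] by (simp add: ig_def)
      then show ?thesis by simp
    qed
    finally show ?thesis using sum_W_col[OF Q(1) P(1), of "\<lambda>_. 1"] by (simp add: W_def)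
  qed
  have f2: "frob (matfun \<beta> Aj) (matfun (deriv G) A0) = (\<Sum>i\<in>UNIV. \<Sum>k\<in>UNIV. W i k * (\<alpha>$i / \<gamma>$k))"
    unfolding aj g0 frob_QDP W_def by (simp add: ig_def divide_inverse mult.assoc)
  have f3: "frob (matfun \<beta> A0) (matfun (deriv G) Aj) = (\<Sum>i\<in>UNIV. \<Sum>k\<in>UNIV. W i k * (\<gamma>$k / \<alpha>$i))"
  proof -
    have "frob (matfun \<beta> A0) (matfun (deriv G) Aj) = frob (matfun (deriv G) Aj) (matfun \<beta> A0)"
      by (simp add: frob_inner inner_commute)
    also have "\<dots> = (\<Sum>i\<in>UNIV. \<Sum>k\<in>UNIV. W i k * (\<gamma>$k / \<alpha>$i))"
      unfolding a0 gj frob_QDP W_def by (simp add: ia_def divide_inverse mult.commute mult.left_commute)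
    finally show ?thesis .
  qed
  define num where "num = trace (matfun H (matfun (deriv G) Aj)) - trace (matfun H (matfun (deriv G) A0))
              - frob (matfun \<beta> Aj) (matfun (deriv G) Aj - matfun (deriv G) A0)"
  define den where "den = frob (matfun \<beta> A0 - matfun \<beta> Aj) (matfun (deriv G) Aj - matfun (deriv G) A0)"
  have num_eq: "num = (\<Sum>i\<in>UNIV. \<Sum>k\<in>UNIV. W i k * (\<alpha>$i / \<gamma>$k - 1 - ln (\<alpha>$i / \<gamma>$k)))"
  proof -
    have "num = trace (matfun H (matfun (deriv G) Aj)) - trace (matfun H (matfun (deriv G) A0))
       - frob (matfun \<beta> Aj) (matfun (deriv G) Aj) + frob (matfun \<beta> Aj) (matfun (deriv G) A0)"
      by (simp add: num_def frob_inner inner_diff_right)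
    also have "\<dots> = (\<Sum>i\<in>UNIV. \<Sum>k\<in>UNIV. W i k * (- ln (\<alpha>$i)) - W i k * (- ln (\<gamma>$k)) - W i k * 1
         + W i k * (\<alpha>$i / \<gamma>$k))"
      unfolding Tj T0 f1 f2 by (simp add: sum.distrib sum_subtractf sum_negf)
    also have "\<dots> = (\<Sum>i\<in>UNIV. \<Sum>k\<in>UNIV. W i k * (\<alpha>$i / \<gamma>$k - 1 - ln (\<alpha>$i / \<gamma>$k)))"
      using ap gp by (intro sum.cong refl) (simp add: ln_div algebra_simps anz gnz)
    finally show ?thesis .
  qed
  have dn_eq: "den - num = (\<Sum>i\<in>UNIV. \<Sum>k\<in>UNIV. W i k * (\<gamma>$k / \<alpha>$i - 1 - ln (\<gamma>$k / \<alpha>$i)))"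
  proof -
    have "den - num = frob (matfun \<beta> A0) (matfun (deriv G) Aj) - frob (matfun \<beta> A0) (matfun (deriv G) A0)
       - trace (matfun H (matfun (deriv G) Aj)) + trace (matfun H (matfun (deriv G) A0))"
      by (simp add: num_def den_def frob_inner inner_diff_right inner_diff_left)
    also have "\<dots> = (\<Sum>i\<in>UNIV. \<Sum>k\<in>UNIV. W i k * (\<gamma>$k / \<alpha>$i) - W i k * 1
         - W i k * (- ln (\<alpha>$i)) + W i k * (- ln (\<gamma>$k)))"
      unfolding Tj T0 f3 f4 by (simp add: sum.distrib sum_subtractf sum_negf)
    also have "\<dots> = (\<Sum>i\<in>UNIV. \<Sum>k\<in>UNIV. W i k * (\<gamma>$k / \<alpha>$i - 1 - ln (\<gamma>$k / \<alpha>$i)))"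
      using ap gp by (intro sum.cong refl) (simp add: ln_div algebra_simps anz gnz)
    finally show ?thesis .
  qed
  have n0: "num \<ge> 0" unfolding num_eq
    using ap gp W0 by (intro sum_nonneg mult_nonneg_nonneg x_minus_ln divide_pos_pos) auto
  have dn0: "den - num \<ge> 0" unfolding dn_eq
    using ap gp W0 by (intro sum_nonneg mult_nonneg_nonneg x_minus_ln divide_pos_pos) auto
  have dnz: "den \<noteq> 0"
  proof -
    have "den = - frob (matfun \<beta> Aj - matfun \<beta> A0) (matfun (deriv G) Aj - matfun (deriv G) A0)"
      by (simp add: den_def frob_inner inner_diff_left)
    then show ?thesis using nz by simp
  qed
  have dpos: "den > 0" using n0 dn0 dnz by linarith
  have "0 \<le> num / den \<and> num / den \<le> 1" using n0 dn0 dpos by (simp add: divide_le_eq_1)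
  then show ?thesis by (simp add: num_def den_def)
qed



lemma simplex_basic:
  fixes K :: "'n::finite lsimplex"
  assumes "is_simplex K"
  shows "fst K \<notin> range (snd K)" "inj (snd K)"
proof -
  have c: "card (insert (fst K) (range (snd K))) = CARD('n) + 1"
    using assms by (simp add: is_simplex_def verts_def)
  have le: "card (range (snd K)) \<le> CARD('n)" using card_image_le[of UNIV "snd K"] by simp
  show nin: "fst K \<notin> range (snd K)"
  proof
    assume "fst K \<in> range (snd K)"
    then have "insert (fst K) (range (snd K)) = range (snd K)" by auto
    then show False using c le by simp
  qed
  have "card (range (snd K)) = CARD('n)" using c nin by (simp add: card_insert_if)
  then show "inj (snd K)" using inj_on_iff_eq_card[of UNIV "snd K"] by simp
qed

lemma inv_unique:
  fixes A X :: "real^'n::finite^'n"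
  assumes "A ** X = mat 1" "X ** A = mat 1"
  shows "matrix_inv A = X"
proof -
  have ex: "\<exists>Y. A ** Y = mat 1 \<and> Y ** A = mat 1" using assms by blast
  let ?Y = "matrix_inv A"
  have Y: "A ** ?Y = mat 1 \<and> ?Y ** A = mat 1" unfolding matrix_inv_def by (rule someI_ex[OF ex])
  have "?Y = ?Y ** (A ** X)" using assms by simp
  also have "\<dots> = (?Y ** A) ** X" by (simp add: matrix_mul_assoc)
  also have "\<dots> = X" using Y by simp
  finally show ?thesis .
qed

lemma BK_col: "BK K $ i $ j = (snd K j - fst K) $ i"
  by (simp add: BK_def)

lemma BK_invertible:
  fixes K :: "'n::finite lsimplex"
  assumes S: "is_simplex K"
  shows "matrix_inv (BK K) ** BK K = mat 1" "BK K ** matrix_inv (BK K) = mat 1"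
proof -
  note sb = simplex_basic[OF S]
  define P' where "P' j = - fst K + snd K j" for j
  have injP': "inj P'" using sb(2) by (auto simp: P'_def inj_def)
  have "\<not> affine_dependent (verts K)" using S by (simp add: is_simplex_def)
  then have ind: "independent ((+) (- fst K) ` range (snd K))"
    using affine_dependent_iff_dependent[OF sb(1)] by (simp add: verts_def)
  have rng: "(+) (- fst K) ` range (snd K) = range P'" by (auto simp: P'_def)
  have "\<exists>X. X ** BK K = mat 1"
    unfolding matrix_left_invertible_independent_columns
  proof (rule allI, rule impI)
    fix c :: "'n \<Rightarrow> real"
    assume h: "(\<Sum>i\<in>UNIV. c i *s column i (BK K)) = 0"
    have col: "column i (BK K) = P' i" for i
      by (simp add: column_def BK_def P'_def vec_eq_iff)
    define c' where "c' v = c (inv P' v)" for v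
    have "(\<Sum>v\<in>range P'. c' v *\<^sub>R v) = (\<Sum>i\<in>UNIV. c' (P' i) *\<^sub>R P' i)"
      by (simp add: sum.reindex[OF injP'] o_def)
    also have "\<dots> = (\<Sum>i\<in>UNIV. c i *s column i (BK K))"
      by (simp add: c'_def injP' col scalar_mult_eq_scaleR)
    finally have "(\<Sum>v\<in>range P'. c' v *\<^sub>R v) = 0" using h by simp
    moreover have "independent (range P')" using ind rng by simp
    ultimately have "\<forall>v\<in>range P'. c' v = 0" unfolding independent_explicit by blast
    then show "\<forall>i. c i = 0" by (simp add: c'_def injP')
  qed
  then obtain X where X: "X ** BK K = mat 1" by blast
  then have X2: "BK K ** X = mat 1" by (simp add: matrix_left_right_inverse)
  have "matrix_inv (BK K) = X" by (rule inv_unique[OF X2 X])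
  then show "matrix_inv (BK K) ** BK K = mat 1" "BK K ** matrix_inv (BK K) = mat 1" using X X2 by auto
qed

lemma inv_transpose_BK:
  fixes K :: "'n::finite lsimplex"
  assumes S: "is_simplex K"
  shows "matrix_inv (transpose (BK K)) = transpose (matrix_inv (BK K))"
proof (rule inv_unique)
  show "transpose (BK K) ** transpose (matrix_inv (BK K)) = mat 1"
    using BK_invertible(1)[OF S] by (metis matrix_transpose_mul transpose_mat)
  show "transpose (matrix_inv (BK K)) ** transpose (BK K) = mat 1"
    using BK_invertible(2)[OF S] by (metis matrix_transpose_mul transpose_mat)
qed

lemma bary:
  fixes K :: "'n::finite lsimplex"
  assumes S: "is_simplex K" and x: "x \<in> shull K"
  shows "(\<forall>j. (matrix_inv (BK K) *v (x - fst K)) $ j \<ge> 0)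
       \<and> (\<Sum>j\<in>UNIV. (matrix_inv (BK K) *v (x - fst K)) $ j) \<le> 1"
proof -
  note sb = simplex_basic[OF S]
  let ?V = "insert (fst K) (range (snd K))"
  have fin: "finite ?V" by simp
  obtain u where u: "\<forall>v\<in>?V. 0 \<le> u v" "sum u ?V = 1" "(\<Sum>v\<in>?V. u v *\<^sub>R v) = x"
    using x unfolding shull_def verts_def convex_hull_finite[OF fin] by blast
  have s1: "sum u ?V = u (fst K) + (\<Sum>j\<in>UNIV. u (snd K j))"
    using sb by (simp add: sum.reindex)
  have s2: "(\<Sum>v\<in>?V. u v *\<^sub>R v) = u (fst K) *\<^sub>R fst K + (\<Sum>j\<in>UNIV. u (snd K j) *\<^sub>R snd K j)"
    using sb by (simp add: sum.reindex)
  define \<nu> where "\<nu> = (\<chi> j. u (snd K j))"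
  have "x - fst K = (\<Sum>j\<in>UNIV. u (snd K j) *\<^sub>R snd K j) - (1 - u (fst K)) *\<^sub>R fst K"
    using u(3) s2 by (simp add: algebra_simps)
  also have "\<dots> = (\<Sum>j\<in>UNIV. u (snd K j) *\<^sub>R (snd K j - fst K))"
    using u(2) s1 by (simp add: scaleR_diff_right sum_subtractf scaleR_sum_left[symmetric])
  also have "\<dots> = BK K *v \<nu>"
    by (simp add: vec_eq_iff matrix_vector_mult_def BK_def \<nu>_def mult.commute)
  finally have "matrix_inv (BK K) *v (x - fst K) = \<nu>"
    by (simp add: matrix_vector_mul_assoc BK_invertible(1)[OF S])
  moreover have "\<forall>j. \<nu> $ j \<ge> 0" using u(1) by (simp add: \<nu>_def)
  moreover have "(\<Sum>j\<in>UNIV. \<nu> $ j) \<le> 1" using u(1,2) s1 by (simp add: \<nu>_def)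
  ultimately show ?thesis by simp
qed



lemma shull_compact: "compact (shull K)"
  unfolding shull_def verts_def by (intro compact_convex_hull finite_imp_compact) simp

lemma verts_in: "fst K \<in> shull K" "snd K j \<in> shull K"
  unfolding shull_def verts_def by (auto intro: hull_inc)

lemma shape_bound:
  fixes K :: "'n::finite lsimplex"
  assumes S: "is_simplex K" and reg: "diameter (shull K) \<le> \<sigma> * inradius (shull K)"
  shows "\<bar>matrix_inv (BK K) $ j $ m\<bar> * diameter (shull K) \<le> \<sigma>"
proof -
  let ?K = "shull K" let ?d = "diameter (shull K)"
  have bd: "bounded ?K" using shull_compact compact_imp_bounded by blast
  note sb = simplex_basic[OF S]
  have "dist (fst K) (snd K j) \<le> ?d" using bd verts_in by (rule diameter_bounded_bound)
  moreover have "fst K \<noteq> snd K j" using sb(1) by auto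
  ultimately have dpos: "?d > 0" by (smt (verit) zero_less_dist_iff)
  define R where "R = {r. \<exists>x. ball x r \<subseteq> ?K}"
  have R0: "0 \<in> R" by (auto simp: R_def)
  have Rb: "r \<le> ?d" if "r \<in> R" for r
  proof (rule ccontr)
    assume "\<not> r \<le> ?d"
    then have rd: "r > ?d" by simp
    from that obtain x where bx: "ball x r \<subseteq> ?K" unfolding R_def by blast
    define t where "t = (r + ?d) / 2"
    define y where "y = x + t *\<^sub>R (axis j 1 :: real^'n)"
    have tpos: "t > 0" "t < r" "t > ?d" using rd dpos by (auto simp: t_def)
    have dxy: "dist x y = t" using tpos by (simp add: y_def dist_norm)
    have "x \<in> ?K" "y \<in> ?K" using bx dxy tpos rd dpos by auto
    then have "dist x y \<le> ?d" using bd by (intro diameter_bounded_bound)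
    then show False using dxy tpos by simp
  qed
  have bdd: "bdd_above R" by (rule bdd_aboveI[of _ "diameter (shull K)"]) (rule Rb)
  define \<rho> where "\<rho> = inradius ?K"
  have rhoR: "\<rho> = Sup R" by (simp add: \<rho>_def inradius_def R_def)
  have rho0: "\<rho> \<ge> 0" unfolding rhoR using cSup_upper[OF R0 bdd] .
  have rhopos: "\<rho> > 0"
  proof (rule ccontr)
    assume "\<not> \<rho> > 0" then have "\<rho> = 0" using rho0 by simp
    then show False using reg dpos by (simp add: \<rho>_def)
  qed
  have "\<rho> / 2 < Sup R" using rhopos rhoR by simp
  then obtain r where rR: "r \<in> R" and rr: "\<rho> / 2 < r" using less_cSup_iff[of R] R0 bdd by blast
  from rR obtain z where bz: "ball z r \<subseteq> ?K" unfolding R_def by blast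
  define e :: "real^'n" where "e = axis m 1"
  define y1 where "y1 = z + (\<rho> / 2) *\<^sub>R e"
  define y2 where "y2 = z - (\<rho> / 2) *\<^sub>R e"
  have y1K: "y1 \<in> ?K" using bz rr rhopos by (auto simp: y1_def dist_norm e_def)
  have y2K: "y2 \<in> ?K" using bz rr rhopos by (auto simp: y2_def dist_norm e_def)
  let ?Bi = "matrix_inv (BK K)"
  have comp01: "0 \<le> (?Bi *v (y - fst K)) $ j \<and> (?Bi *v (y - fst K)) $ j \<le> 1" if "y \<in> ?K" for y
  proof -
    from bary[OF S that] have nn: "\<forall>j. 0 \<le> (?Bi *v (y - fst K)) $ j"
      and sl: "(\<Sum>j\<in>UNIV. (?Bi *v (y - fst K)) $ j) \<le> 1" by auto
    have "(?Bi *v (y - fst K)) $ j \<le> (\<Sum>j\<in>UNIV. (?Bi *v (y - fst K)) $ j)"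
      using nn by (intro member_le_sum) auto
    then show ?thesis using nn sl by auto
  qed
  have "(?Bi *v (y1 - fst K)) $ j - (?Bi *v (y2 - fst K)) $ j = (?Bi *v (y1 - y2)) $ j"
    by (simp add: matrix_vector_mult_diff_distrib)
  also have "y1 - y2 = \<rho> *\<^sub>R e" by (simp add: y1_def y2_def algebra_simps scaleR_2[symmetric])
  also have "(?Bi *v (\<rho> *\<^sub>R e)) $ j = \<rho> * ?Bi $ j $ m"
    by (simp add: matrix_vector_mult_scaleR e_def matrix_vector_mult_basis column_def)
  finally have "\<bar>\<rho> * ?Bi $ j $ m\<bar> \<le> 1" using comp01[OF y1K] comp01[OF y2K] by linarith
  then have "\<rho> * \<bar>?Bi $ j $ m\<bar> \<le> 1" using rhopos by (simp add: abs_mult)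
  have "\<bar>?Bi $ j $ m\<bar> * ?d \<le> \<bar>?Bi $ j $ m\<bar> * (\<sigma> * \<rho>)"
    using reg by (intro mult_left_mono) (auto simp: \<rho>_def)
  also have "\<dots> = \<sigma> * (\<rho> * \<bar>?Bi $ j $ m\<bar>)" by simp
  also have "\<dots> \<le> \<sigma>"
  proof -
    have "\<sigma> > 0" using reg dpos rhopos by (smt (verit) \<rho>_def mult_nonpos_nonneg)
    then show ?thesis using \<open>\<rho> * \<bar>?Bi $ j $ m\<bar> \<le> 1\<close> by (simp add: mult_left_le)
  qed
  finally show ?thesis .
qed



lemma linear_comp_ij:
  fixes f :: "real^'m::finite \<Rightarrow> real^'n::finite^'n"
  assumes "linear f" shows "linear (\<lambda>v. f v $ i $ j)"
  using assms unfolding linear_iff by (simp add: linear_add linear_scale)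

lemma lin_expand:
  fixes f :: "real^'m::finite \<Rightarrow> real^'n::finite^'n"
  assumes lf: "linear f"
  shows "f v $ i $ j = v \<bullet> (\<chi> k. f (axis k 1) $ i $ j)"
proof -
  have "f v = f (\<Sum>k\<in>UNIV. v $ k *s axis k 1)" by (simp add: basis_expansion)
  also have "\<dots> = (\<Sum>k\<in>UNIV. v $ k *\<^sub>R f (axis k 1))"
    by (simp add: linear_sum[OF lf] linear_scale[OF lf] scalar_mult_eq_scaleR)
  finally show ?thesis by (simp add: inner_vec_def sum_component)
qed

definition Gconst :: "(real^'m::finite \<Rightarrow> real^'n::finite^'n) \<Rightarrow> real" where
  "Gconst f = (\<Sum>i\<in>UNIV. \<Sum>j\<in>UNIV. \<Sum>k\<in>UNIV. (f (axis k 1) $ i $ j)\<^sup>2)"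

lemma Gconst_nonneg: "Gconst f \<ge> 0"
  unfolding Gconst_def by (intro sum_nonneg) simp

lemma lin_bound:
  fixes f :: "real^'m::finite \<Rightarrow> real^'n::finite^'n"
  assumes lf: "linear f"
  shows "norm (f v) \<le> norm v * sqrt (Gconst f)"
proof -
  define b where "b i j = (\<chi> k. f (axis k 1) $ i $ j)" for i j
  have "(norm (f v))^2 = (\<Sum>i\<in>UNIV. \<Sum>j\<in>UNIV. (f v $ i $ j)^2)"
    by (simp only: power2_norm_eq_inner) (simp add: inner_vec_def inner_real_def power2_eq_square)
  also have "\<dots> = (\<Sum>i\<in>UNIV. \<Sum>j\<in>UNIV. (v \<bullet> b i j)^2)" by (simp only: lin_expand[OF lf, of v] b_def)
  also have "\<dots> \<le> (\<Sum>i\<in>UNIV. \<Sum>j\<in>UNIV. (v \<bullet> v) * (b i j \<bullet> b i j))"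
    by (intro sum_mono Cauchy_Schwarz_ineq)
  also have "\<dots> = (norm v)^2 * Gconst f"
  proof -
    have bb: "b i j \<bullet> b i j = (\<Sum>k\<in>UNIV. (f (axis k 1) $ i $ j)^2)" for i j
      by (simp add: b_def inner_vec_def power2_eq_square)
    show ?thesis by (simp only: bb Gconst_def sum_distrib_left[symmetric] dot_square_norm[of v])
  qed
  also have "\<dots> = (norm v * sqrt (Gconst f))^2" by (simp add: power_mult_distrib Gconst_nonneg)
  finally show ?thesis by (rule power2_le_imp_le) (simp add: Gconst_nonneg)
qed

lemma grad_const:
  fixes \<phi> :: "real^'n::finite \<Rightarrow> real^'n^'n"
  assumes lf: "linear f" and aff: "\<forall>x\<in>shull K. \<phi> x = f x + c" and x: "x \<in> interior (shull K)"
  shows "grad_sq K \<phi> x = Gconst f"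
proof -
  have fd: "frechet_derivative (\<lambda>y. \<phi> y $ i $ j) (at x within shull K) = (\<lambda>v. f v $ i $ j)" for i j
  proof -
    have d1: "((\<lambda>y. f y $ i $ j + c $ i $ j) has_derivative (\<lambda>v. f v $ i $ j)) (at x)"
      by (intro has_derivative_add_const linear_imp_has_derivative linear_comp_ij lf)
    have eq: "f y $ i $ j + c $ i $ j = \<phi> y $ i $ j" if "y \<in> interior (shull K)" for y
    proof -
      have "y \<in> shull K" using that interior_subset by blast
      then show ?thesis using aff by simp
    qed
    have d2: "((\<lambda>y. \<phi> y $ i $ j) has_derivative (\<lambda>v. f v $ i $ j)) (at x)"
      by (rule has_derivative_transform_within_open[OF d1 open_interior x eq])
    show ?thesis unfolding at_within_interior[OF x] by (rule frechet_derivative_at[OF d2, symmetric])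
  qed
  show ?thesis unfolding grad_sq_def Gconst_def fd by simp
qed

lemma integral_grad:
  fixes \<phi> :: "real^'n::finite \<Rightarrow> real^'n^'n"
  assumes lf: "linear f" and aff: "\<forall>x\<in>shull K. \<phi> x = f x + c"
  shows "integral (shull K) (grad_sq K \<phi>) = Gconst f * measure lebesgue (shull K)"
proof -
  have cv: "convex (shull K)" by (simp add: shull_def convex_convex_hull)
  have cl: "closed (shull K)" using shull_compact compact_imp_closed by blast
  have "integral (shull K) (grad_sq K \<phi>) = integral (shull K) (\<lambda>x. Gconst f * 1)"
  proof (rule integral_spike[OF negligible_convex_frontier[OF cv]])
    fix x assume "x \<in> shull K - frontier (shull K)"
    then have "x \<in> interior (shull K)" using cl by (simp add: frontier_def closure_closed)
    then show "Gconst f * 1 = grad_sq K \<phi> x" using grad_const[OF lf aff] by simp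
  qed
  also have "\<dots> = Gconst f * measure lebesgue (shull K)"
    by (simp only: integral_mult_right lmeasure_integral[OF lmeasurable_compact[OF shull_compact], symmetric])
  finally show ?thesis .
qed

lemma integral_bound:
  fixes g :: "real^'n::finite \<Rightarrow> real"
  assumes S: "S \<in> lmeasurable" and b: "\<And>x. x \<in> S \<Longrightarrow> 0 \<le> g x \<and> g x \<le> M"
  shows "integral S g \<le> M * measure lebesgue S"
proof (cases "S = {}")
  case True then show ?thesis by simp
next
  case False
  then obtain x0 where "x0 \<in> S" by blast
  then have M0: "M \<ge> 0" using b by force
  show ?thesis
  proof (cases "g integrable_on S")
    case True
    have "integral S g \<le> integral S (\<lambda>x. M * 1)"
      by (rule integral_le[OF True]) (use b integrable_on_const[OF S] in auto)
    also have "\<dots> = M * measure lebesgue S"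
      by (simp only: integral_mult_right lmeasure_integral[OF S, symmetric])
    finally show ?thesis .
  next
    case False
    then show ?thesis using M0 by (simp add: not_integrable_integral)
  qed
qed



lemma pointwise_interp:
  fixes K :: "'n::finite lsimplex" and b :: "real^'n \<Rightarrow> real^'n^'n"
  assumes S: "is_simplex K" and x: "x \<in> shull K" and M: "M \<ge> 0"
    and b0: "norm (b (fst K) - b x) \<le> M" and bj: "\<And>j. norm (b (snd K j) - b x) \<le> M"
  shows "frob_sq (interpK K b x - b x) \<le> M^2"
proof -
  define \<mu> where "\<mu> = matrix_inv (BK K) *v (x - fst K)"
  define l0 where "l0 = 1 - (\<Sum>j\<in>UNIV. \<mu> $ j)"
  have mu0: "\<mu> $ j \<ge> 0" for j using bary[OF S x] by (simp add: \<mu>_def)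
  have l00: "l0 \<ge> 0" using bary[OF S x] by (simp add: l0_def \<mu>_def)
  have "interpK K b x - b x = l0 *\<^sub>R b (fst K) + (\<Sum>j\<in>UNIV. \<mu> $ j *\<^sub>R b (snd K j))
      - (l0 + (\<Sum>j\<in>UNIV. \<mu> $ j)) *\<^sub>R b x"
    by (simp add: interpK_def Let_def \<mu>_def[symmetric] l0_def)
  also have "\<dots> = l0 *\<^sub>R (b (fst K) - b x) + (\<Sum>j\<in>UNIV. \<mu> $ j *\<^sub>R (b (snd K j) - b x))"
    by (simp add: scaleR_diff_right sum_subtractf scaleR_add_left scaleR_sum_left algebra_simps)
  finally have eq: "interpK K b x - b x = l0 *\<^sub>R (b (fst K) - b x) + (\<Sum>j\<in>UNIV. \<mu> $ j *\<^sub>R (b (snd K j) - b x))" .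
  have "norm (interpK K b x - b x) \<le> norm (l0 *\<^sub>R (b (fst K) - b x)) + norm (\<Sum>j\<in>UNIV. \<mu> $ j *\<^sub>R (b (snd K j) - b x))"
    unfolding eq by (rule norm_triangle_ineq)
  also have "\<dots> \<le> l0 * M + (\<Sum>j\<in>UNIV. \<mu> $ j * M)"
  proof (rule add_mono)
    show "norm (l0 *\<^sub>R (b (fst K) - b x)) \<le> l0 * M" using l00 b0 by (simp add: mult_left_mono)
    have "norm (\<Sum>j\<in>UNIV. \<mu> $ j *\<^sub>R (b (snd K j) - b x)) \<le> (\<Sum>j\<in>UNIV. norm (\<mu> $ j *\<^sub>R (b (snd K j) - b x)))"
      by (rule norm_sum)
    also have "\<dots> \<le> (\<Sum>j\<in>UNIV. \<mu> $ j * M)"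
      by (intro sum_mono) (use mu0 bj in \<open>simp add: mult_left_mono\<close>)
    finally show "norm (\<Sum>j\<in>UNIV. \<mu> $ j *\<^sub>R (b (snd K j) - b x)) \<le> (\<Sum>j\<in>UNIV. \<mu> $ j * M)" .
  qed
  also have "\<dots> = M"
  proof -
    have "(\<Sum>j\<in>UNIV. \<mu> $ j * M) = (\<Sum>j\<in>UNIV. \<mu> $ j) * M" by (simp add: sum_distrib_right)
    then show ?thesis by (simp add: l0_def algebra_simps)
  qed
  finally have "norm (interpK K b x - b x) \<le> M" .
  then show ?thesis unfolding frob_sq_norm by (simp add: power_mono)
qed

lemma pointwise_lambda:
  fixes K :: "'n::finite lsimplex"
  assumes S: "is_simplex K" and reg: "diameter (shull K) \<le> \<sigma> * inradius (shull K)"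
    and card3: "CARD('n) \<le> 3" and M: "M \<ge> 0"
    and hb: "\<And>j. norm (Lambda_hat G \<beta> H K \<phi> j - X) \<le> M"
  shows "frob_sq (Lambda G \<beta> H K \<phi> m p - (if m = p then 1 else 0) *\<^sub>R X) \<le> 9 * \<sigma>^2 * M^2"
proof -
  let ?B = "BK K" let ?Bi = "matrix_inv (BK K)" let ?d = "diameter (shull K)"
  define c where "c j = matrix_inv (transpose ?B) $ m $ j * transpose ?B $ j $ p" for j
  have cN: "c j = ?Bi $ j $ m * ?B $ p $ j" for j
    unfolding c_def inv_transpose_BK[OF S] by (simp add: transpose_def)
  have bd: "bounded (shull K)" using shull_compact compact_imp_bounded by blast
  have Bpj: "\<bar>?B $ p $ j\<bar> \<le> ?d" for j
  proof -
    have "\<bar>?B $ p $ j\<bar> \<le> norm (snd K j - fst K)" unfolding BK_col by (rule component_le_norm_cart)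
    also have "\<dots> = dist (snd K j) (fst K)" by (simp add: dist_norm)
    also have "\<dots> \<le> ?d" by (rule diameter_bounded_bound[OF bd verts_in(2) verts_in(1)])
    finally show ?thesis .
  qed
  have cb: "\<bar>c j\<bar> \<le> \<sigma>" for j
  proof -
    have "\<bar>c j\<bar> = \<bar>?Bi $ j $ m\<bar> * \<bar>?B $ p $ j\<bar>" by (simp add: cN abs_mult)
    also have "\<dots> \<le> \<bar>?Bi $ j $ m\<bar> * ?d" by (intro mult_left_mono Bpj) simp
    also have "\<dots> \<le> \<sigma>" by (rule shape_bound[OF S reg])
    finally show ?thesis .
  qed
  have s0: "\<sigma> \<ge> 0" by (rule order_trans[OF abs_ge_zero cb])
  have csum: "(\<Sum>j\<in>UNIV. c j) = (if m = p then 1 else 0)"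
  proof -
    have "matrix_inv (transpose ?B) ** transpose ?B = mat 1"
      unfolding inv_transpose_BK[OF S] by (metis BK_invertible(2)[OF S] matrix_transpose_mul transpose_mat)
    then have "(matrix_inv (transpose ?B) ** transpose ?B) $ m $ p = (if m = p then 1 else 0)"
      by (simp add: mat_def)
    then show ?thesis by (simp add: c_def matrix_matrix_mult_def)
  qed
  have "Lambda G \<beta> H K \<phi> m p - (if m = p then 1 else 0) *\<^sub>R X
      = (\<Sum>j\<in>UNIV. c j *\<^sub>R Lambda_hat G \<beta> H K \<phi> j) - (\<Sum>j\<in>UNIV. c j) *\<^sub>R X"
  proof -
    have "Lambda G \<beta> H K \<phi> m p = (\<Sum>j\<in>UNIV. c j *\<^sub>R Lambda_hat G \<beta> H K \<phi> j)"
      unfolding Lambda_def c_def by simp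
    then show ?thesis by (simp only: csum)
  qed
  also have "\<dots> = (\<Sum>j\<in>UNIV. c j *\<^sub>R (Lambda_hat G \<beta> H K \<phi> j - X))"
    by (simp add: scaleR_diff_right sum_subtractf scaleR_sum_left)
  finally have eq: "Lambda G \<beta> H K \<phi> m p - (if m = p then 1 else 0) *\<^sub>R X
      = (\<Sum>j\<in>UNIV. c j *\<^sub>R (Lambda_hat G \<beta> H K \<phi> j - X))" .
  have "norm (Lambda G \<beta> H K \<phi> m p - (if m = p then 1 else 0) *\<^sub>R X)
      \<le> (\<Sum>j\<in>UNIV. norm (c j *\<^sub>R (Lambda_hat G \<beta> H K \<phi> j - X)))"
    unfolding eq by (rule norm_sum)
  also have "\<dots> \<le> (\<Sum>j\<in>(UNIV::'n set). \<sigma> * M)"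
  proof (rule sum_mono)
    fix j
    have "norm (c j *\<^sub>R (Lambda_hat G \<beta> H K \<phi> j - X)) = \<bar>c j\<bar> * norm (Lambda_hat G \<beta> H K \<phi> j - X)"
      by simp
    also have "\<dots> \<le> \<sigma> * M" using cb[of j] hb[of j] M by (intro mult_mono) auto
    finally show "norm (c j *\<^sub>R (Lambda_hat G \<beta> H K \<phi> j - X)) \<le> \<sigma> * M" .
  qed
  also have "\<dots> = real CARD('n) * (\<sigma> * M)" by simp
  also have "\<dots> \<le> 3 * (\<sigma> * M)" using card3 s0 M by (intro mult_right_mono) auto
  finally have nb: "norm (Lambda G \<beta> H K \<phi> m p - (if m = p then 1 else 0) *\<^sub>R X) \<le> 3 * (\<sigma> * M)" .
  have "frob_sq (Lambda G \<beta> H K \<phi> m p - (if m = p then 1 else 0) *\<^sub>R X) \<le> (3 * (\<sigma> * M))^2"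
    unfolding frob_sq_norm by (rule power_mono[OF nb]) simp
  also have "\<dots> = 9 * \<sigma>^2 * M^2" by (simp add: power_mult_distrib)
  finally show ?thesis .
qed

lemma hat_bound:
  fixes K :: "'n::finite lsimplex" and \<phi> :: "real^'n \<Rightarrow> real^'n^'n"
  assumes tr: "(G, \<beta>, H) \<in> admissible_triples"
    and pd0: "sym_posdef (\<phi> (fst K))" and pdj: "sym_posdef (\<phi> (snd K j))"
    and b0: "norm (matfun \<beta> (\<phi> (fst K)) - X) \<le> M" and bj: "norm (matfun \<beta> (\<phi> (snd K j)) - X) \<le> M"
  shows "norm (Lambda_hat G \<beta> H K \<phi> j - X) \<le> M"
proof -
  let ?a0 = "matfun \<beta> (\<phi> (fst K))" and ?aj = "matfun \<beta> (\<phi> (snd K j))"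
  let ?g0 = "matfun (deriv G) (\<phi> (fst K))" and ?gj = "matfun (deriv G) (\<phi> (snd K j))"
  show ?thesis
  proof (cases "frob (?aj - ?a0) (?gj - ?g0) \<noteq> 0")
    case True
    define l where "l = (trace (matfun H ?gj) - trace (matfun H ?g0) - frob ?aj (?gj - ?g0)) / frob (?a0 - ?aj) (?gj - ?g0)"
    have l01: "0 \<le> l \<and> l \<le> 1" unfolding l_def by (rule lam_unit[OF tr pd0 pdj True])
    have "Lambda_hat G \<beta> H K \<phi> j = (1 - l) *\<^sub>R ?aj + l *\<^sub>R ?a0"
      using True unfolding Lambda_hat_def Let_def l_def by simp
    then have "Lambda_hat G \<beta> H K \<phi> j - X = (1 - l) *\<^sub>R (?aj - X) + l *\<^sub>R (?a0 - X)"
      by (simp add: algebra_simps)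
    also have "norm \<dots> \<le> (1 - l) * M + l * M"
    proof -
      have "norm ((1 - l) *\<^sub>R (?aj - X) + l *\<^sub>R (?a0 - X)) \<le> norm ((1 - l) *\<^sub>R (?aj - X)) + norm (l *\<^sub>R (?a0 - X))"
        by (rule norm_triangle_ineq)
      also have "\<dots> \<le> (1 - l) * M + l * M"
        using l01 b0 bj by (intro add_mono) (simp_all add: mult_left_mono)
      finally show ?thesis .
    qed
    finally show ?thesis by (simp add: algebra_simps)
  next
    case False
    then have "Lambda_hat G \<beta> H K \<phi> j = ?aj" by (simp add: Lambda_hat_def Let_def)
    then show ?thesis using bj by simp
  qed
qed



lemma main_K:
  fixes D :: "(real^'n::finite) set" and \<phi> :: "real^'n \<Rightarrow> real^'n^'n"
  assumes card3: "CARD('n) \<le> 3"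
    and part: "conforming_partition D T" and KT: "K \<in> T"
    and reg: "diameter (shull K) \<le> \<sigma> * inradius (shull K)"
    and phi: "\<phi> \<in> S1hPD D T" and tr: "(G, \<beta>, H) \<in> admissible_triples"
  shows "integral (shull K) (\<lambda>x. frob_sq (interpK K (\<lambda>y. matfun \<beta> (\<phi> y)) x - matfun \<beta> (\<phi> x)))
        + Max ((\<lambda>(m, p). integral (shull K)
              (\<lambda>x. frob_sq (Lambda G \<beta> H K \<phi> m p - (if m = p then 1 else 0) *\<^sub>R matfun \<beta> (\<phi> x))))
            ` UNIV)
        \<le> (1 + 9 * \<sigma>^2) * (meshsize T)\<^sup>2 * integral (shull K) (grad_sq K \<phi>)"
proof -
  have S: "is_simplex K" using part KT by (simp add: conforming_partition_def)
  have finT: "finite T" using part by (simp add: conforming_partition_def)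
  have KD: "shull K \<subseteq> D" using part KT by (auto simp: conforming_partition_def)
  have symD: "\<forall>x\<in>D. transpose (\<phi> x) = \<phi> x" using phi by (simp add: S1hPD_def S1h_def)
  have "\<exists>f c. linear f \<and> (\<forall>x\<in>shull K. \<phi> x = f x + c)"
    using phi KT by (simp add: S1hPD_def S1h_def)
  then obtain f c where lf: "linear f" and aff: "\<forall>x\<in>shull K. \<phi> x = f x + c" by blast
  have pdv: "\<forall>P\<in>verts K. sym_posdef (\<phi> P)" using phi KT by (simp add: S1hPD_def)
  have pd0: "sym_posdef (\<phi> (fst K))" and pdj: "\<And>j. sym_posdef (\<phi> (snd K j))"
    using pdv by (auto simp: verts_def)
  define h where "h = meshsize T"
  let ?d = "diameter (shull K)"
  have bd: "bounded (shull K)" using shull_compact compact_imp_bounded by blast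
  have dh: "?d \<le> h" unfolding h_def meshsize_def using finT KT by (intro Max_ge) auto
  have d0: "?d \<ge> 0" using diameter_bounded_bound[OF bd verts_in(1) verts_in(1)] by simp
  define Gc where "Gc = Gconst f"
  have Gc0: "Gc \<ge> 0" by (simp add: Gc_def Gconst_nonneg)
  define M where "M = h * sqrt Gc"
  have M0: "M \<ge> 0" using dh d0 Gc0 by (simp add: M_def)
  have lipb: "\<forall>s t. \<bar>\<beta> s - \<beta> t\<bar> \<le> \<bar>s - t\<bar>" using triple_props[OF tr] by blast
  have bnd: "norm (matfun \<beta> (\<phi> v) - matfun \<beta> (\<phi> x)) \<le> M" if v: "v \<in> shull K" and x: "x \<in> shull K" for v x
  proof -
    have "norm (matfun \<beta> (\<phi> v) - matfun \<beta> (\<phi> x)) \<le> norm (\<phi> v - \<phi> x)"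
      using symD KD v x lipb by (intro matfun_lip) auto
    also have "\<phi> v - \<phi> x = f (v - x)" using aff v x by (simp add: linear_diff[OF lf])
    also have "norm (f (v - x)) \<le> norm (v - x) * sqrt Gc" unfolding Gc_def by (rule lin_bound[OF lf])
    also have "\<dots> \<le> h * sqrt Gc"
    proof (rule mult_right_mono)
      have "norm (v - x) = dist v x" by (simp add: dist_norm)
      also have "\<dots> \<le> ?d" by (rule diameter_bounded_bound[OF bd v x])
      finally show "norm (v - x) \<le> h" using dh by simp
    qed (simp add: Gc0)
    finally show ?thesis by (simp add: M_def)
  qed
  have meas: "shull K \<in> lmeasurable" by (rule lmeasurable_compact[OF shull_compact])
  define mK where "mK = measure lebesgue (shull K)"
  have MM: "M^2 = h^2 * Gc" using Gc0 by (simp add: M_def power_mult_distrib)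
  have I1: "integral (shull K) (\<lambda>x. frob_sq (interpK K (\<lambda>y. matfun \<beta> (\<phi> y)) x - matfun \<beta> (\<phi> x)))
      \<le> M^2 * mK"
    unfolding mK_def
  proof (rule integral_bound[OF meas])
    fix x assume x: "x \<in> shull K"
    have "frob_sq (interpK K (\<lambda>y. matfun \<beta> (\<phi> y)) x - matfun \<beta> (\<phi> x)) \<le> M^2"
      by (rule pointwise_interp[OF S x M0]) (auto intro!: bnd x verts_in)
    then show "0 \<le> frob_sq (interpK K (\<lambda>y. matfun \<beta> (\<phi> y)) x - matfun \<beta> (\<phi> x))
       \<and> frob_sq (interpK K (\<lambda>y. matfun \<beta> (\<phi> y)) x - matfun \<beta> (\<phi> x)) \<le> M^2"
      by (simp add: frob_sq_norm)
  qed
  have I2: "Max ((\<lambda>(m, p). integral (shull K)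
              (\<lambda>x. frob_sq (Lambda G \<beta> H K \<phi> m p - (if m = p then 1 else 0) *\<^sub>R matfun \<beta> (\<phi> x))))
            ` UNIV) \<le> 9 * \<sigma>^2 * M^2 * mK"
  proof (rule Max.boundedI)
    show "finite ((\<lambda>(m, p). integral (shull K)
              (\<lambda>x. frob_sq (Lambda G \<beta> H K \<phi> m p - (if m = p then 1 else 0) *\<^sub>R matfun \<beta> (\<phi> x))))
            ` UNIV)" by simp
    show "(\<lambda>(m, p). integral (shull K)
              (\<lambda>x. frob_sq (Lambda G \<beta> H K \<phi> m p - (if m = p then 1 else 0) *\<^sub>R matfun \<beta> (\<phi> x))))
            ` UNIV \<noteq> {}" by simp
  next
    fix a assume "a \<in> (\<lambda>(m, p). integral (shull K)
              (\<lambda>x. frob_sq (Lambda G \<beta> H K \<phi> m p - (if m = p then 1 else 0) *\<^sub>R matfun \<beta> (\<phi> x))))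
            ` UNIV"
    then obtain m p where a: "a = integral (shull K)
              (\<lambda>x. frob_sq (Lambda G \<beta> H K \<phi> m p - (if m = p then 1 else 0) *\<^sub>R matfun \<beta> (\<phi> x)))"
      by auto
    show "a \<le> 9 * \<sigma>^2 * M^2 * mK"
      unfolding a mK_def
    proof (rule integral_bound[OF meas])
      fix x assume x: "x \<in> shull K"
      have hb: "norm (Lambda_hat G \<beta> H K \<phi> j - matfun \<beta> (\<phi> x)) \<le> M" for j
        by (rule hat_bound[OF tr pd0 pdj]) (auto intro!: bnd x verts_in)
      have "frob_sq (Lambda G \<beta> H K \<phi> m p - (if m = p then 1 else 0) *\<^sub>R matfun \<beta> (\<phi> x)) \<le> 9 * \<sigma>^2 * M^2"
        by (rule pointwise_lambda[OF S reg card3 M0 hb])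
      then show "0 \<le> frob_sq (Lambda G \<beta> H K \<phi> m p - (if m = p then 1 else 0) *\<^sub>R matfun \<beta> (\<phi> x))
        \<and> frob_sq (Lambda G \<beta> H K \<phi> m p - (if m = p then 1 else 0) *\<^sub>R matfun \<beta> (\<phi> x)) \<le> 9 * \<sigma>^2 * M^2"
        by (simp add: frob_sq_norm)
    qed
  qed
  have IG: "integral (shull K) (grad_sq K \<phi>) = Gc * mK"
    unfolding Gc_def mK_def by (rule integral_grad[OF lf aff])
  have "integral (shull K) (\<lambda>x. frob_sq (interpK K (\<lambda>y. matfun \<beta> (\<phi> y)) x - matfun \<beta> (\<phi> x)))
        + Max ((\<lambda>(m, p). integral (shull K)
              (\<lambda>x. frob_sq (Lambda G \<beta> H K \<phi> m p - (if m = p then 1 else 0) *\<^sub>R matfun \<beta> (\<phi> x))))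
            ` UNIV) \<le> M^2 * mK + 9 * \<sigma>^2 * M^2 * mK" using I1 I2 by (rule add_mono)
  also have "\<dots> = (1 + 9 * \<sigma>^2) * h^2 * (Gc * mK)" by (simp add: MM algebra_simps)
  finally show ?thesis by (simp add: IG h_def)
qed

theorem lemma5p3:
  fixes \<sigma> :: real
  assumes dim: "CARD('n::finite) = 2 \<or> CARD('n) = 3"
  shows "\<exists>C::real. \<forall>(D::(real^'n) set) T h.
     conforming_partition D T \<and> h = meshsize T
     \<and> (\<forall>K\<in>T. diameter (shull K) \<le> \<sigma> * inradius (shull K)) \<longrightarrow>
     (\<forall>K\<in>T. \<forall>\<phi>\<in>S1hPD D T. \<forall>(G, \<beta>, H)\<in>admissible_triples.
        integral (shull K) (\<lambda>x. frob_sq (interpK K (\<lambda>y. matfun \<beta> (\<phi> y)) x - matfun \<beta> (\<phi> x)))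
        + Max ((\<lambda>(m, p). integral (shull K)
              (\<lambda>x. frob_sq (Lambda G \<beta> H K \<phi> m p - (if m = p then 1 else 0) *\<^sub>R matfun \<beta> (\<phi> x))))
            ` UNIV)
        \<le> C * h\<^sup>2 * integral (shull K) (grad_sq K \<phi>))"
proof (intro exI[of _ "1 + 9 * \<sigma>^2"] allI impI ballI)
  fix D :: "(real^'n) set" and T h K \<phi> and x :: "(real \<Rightarrow> real) \<times> (real \<Rightarrow> real) \<times> (real \<Rightarrow> real)"
  assume H: "conforming_partition D T \<and> h = meshsize T \<and> (\<forall>K\<in>T. diameter (shull K) \<le> \<sigma> * inradius (shull K))"
    and KT: "K \<in> T" and phi: "\<phi> \<in> S1hPD D T" and tr: "x \<in> admissible_triples"
  have card3: "CARD('n) \<le> 3" using dim by auto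
  obtain G \<beta> H' where xe: "x = (G, \<beta>, H')" by (cases x) auto
  show "case x of (G, \<beta>, H) \<Rightarrow>
        integral (shull K) (\<lambda>x. frob_sq (interpK K (\<lambda>y. matfun \<beta> (\<phi> y)) x - matfun \<beta> (\<phi> x)))
        + Max ((\<lambda>(m, p). integral (shull K)
              (\<lambda>x. frob_sq (Lambda G \<beta> H K \<phi> m p - (if m = p then 1 else 0) *\<^sub>R matfun \<beta> (\<phi> x))))
            ` UNIV)
        \<le> (1 + 9 * \<sigma>^2) * h\<^sup>2 * integral (shull K) (grad_sq K \<phi>)"
  proof -
    have part: "conforming_partition D T" and hd: "h = meshsize T"
      and reg: "diameter (shull K) \<le> \<sigma> * inradius (shull K)" using H KT by auto
    have tr': "(G, \<beta>, H') \<in> admissible_triples" using tr xe by simp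
    show ?thesis unfolding xe using main_K[OF card3 part KT reg phi tr'] hd by simp
  qed
qed


end
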